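(* For $1<p<\infty$, the Banach lattice $\ell_p$ (with coordinatewise order) contains a basis $(u_i)$ of $\ell_p$ which is equivalent to the canonical basis $(e_i)$ of $\ell_p$ and which is neither bibasic nor uniformly quasi-greedy.
   Context: A sequence $(x_k)$ of nonzero vectors in a Banach lattice is bibasic if there is $M\ge1$ with $\|\bigvee_{n=1}^m|\sum_{k=1}^na_kx_k|\|\le M\|\sum_{k=1}^ma_kx_k\|$ for all $m$ and scalars $a_k$. A semi-normalized basic sequence $(x_k)$ with span $E$ and biorthogonal functionals $x_k^*$ is uniformly quasi-greedy if $\sup_m\sup_{x\in E,\|x\|=1}\|\bigvee_{n=1}^m|\mathcal{G}_n(x)|\|<\infty$, where $\mathcal{G}_n(x)=\sum_{j=1}^n x^*_{\rho(j)}(x)x_{\rho(j)}$ and $\rho$ is the natural greedy ordering of $x$ (indices listed by non-increasing $|x_k^*(x)|$, ties broken by increasing index). *)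

theory Defs
  imports "HOL-Analysis.Analysis"
begin

definition lp :: "real \<Rightarrow> (nat \<Rightarrow> real) set" where
  "lp p = {x. summable (\<lambda>i. \<bar>x i\<bar> powr p)}"

definition lp_norm :: "real \<Rightarrow> (nat \<Rightarrow> real) \<Rightarrow> real" where
  "lp_norm p x = (\<Sum>i. \<bar>x i\<bar> powr p) powr (1 / p)"

definition canon_basis :: "nat \<Rightarrow> nat \<Rightarrow> real" where
  "canon_basis k = (\<lambda>i. if i = k then 1 else 0)"

definition lincomb :: "(nat \<Rightarrow> real) \<Rightarrow> (nat \<Rightarrow> nat \<Rightarrow> real) \<Rightarrow> nat \<Rightarrow> nat \<Rightarrow> real" where
  "lincomb a u n = (\<lambda>i. \<Sum>k<n. a k * u k i)"

definition has_expansion :: "real \<Rightarrow> (nat \<Rightarrow> nat \<Rightarrow> real) \<Rightarrow> (nat \<Rightarrow> real) \<Rightarrow> (nat \<Rightarrow> real) \<Rightarrow> bool" where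
  "has_expansion p u x a \<longleftrightarrow> (\<lambda>n. lp_norm p (\<lambda>i. x i - lincomb a u n i)) \<longlonglongrightarrow> 0"

definition schauder_basis :: "real \<Rightarrow> (nat \<Rightarrow> nat \<Rightarrow> real) \<Rightarrow> bool" where
  "schauder_basis p u \<longleftrightarrow> (\<forall>k. u k \<in> lp p) \<and>
     (\<forall>x \<in> lp p. \<exists>!a. has_expansion p u x a)"

definition equivalent_seq :: "real \<Rightarrow> (nat \<Rightarrow> nat \<Rightarrow> real) \<Rightarrow> (nat \<Rightarrow> nat \<Rightarrow> real) \<Rightarrow> bool" where
  "equivalent_seq p u v \<longleftrightarrow> (\<exists>C>0. \<forall>a m.
      lp_norm p (lincomb a u m) \<le> C * lp_norm p (lincomb a v m) \<and>
      lp_norm p (lincomb a v m) \<le> C * lp_norm p (lincomb a u m))"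

text \<open>Bibasic (indices start at 0): there is M >= 1 with
  || max_{n<=m} |sum_{k<=n} a_k x_k| || <= M || sum_{k<=m} a_k x_k ||, lattice operations coordinatewise.\<close>
definition bibasic :: "real \<Rightarrow> (nat \<Rightarrow> nat \<Rightarrow> real) \<Rightarrow> bool" where
  "bibasic p x \<longleftrightarrow> (\<forall>k. x k \<noteq> (\<lambda>i. 0)) \<and>
     (\<exists>M\<ge>1. \<forall>m a.
        lp_norm p (\<lambda>i. Max ((\<lambda>n. \<bar>lincomb a x (Suc n) i\<bar>) ` {..m}))
          \<le> M * lp_norm p (lincomb a x (Suc m)))"

text \<open>Biorthogonal coefficient functionals on the closed span (= set of elements with an expansion).\<close>
definition coef :: "real \<Rightarrow> (nat \<Rightarrow> nat \<Rightarrow> real) \<Rightarrow> (nat \<Rightarrow> real) \<Rightarrow> nat \<Rightarrow> real" where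
  "coef p u x = (THE a. has_expansion p u x a)"

definition greedy_prec :: "(nat \<Rightarrow> real) \<Rightarrow> nat \<Rightarrow> nat \<Rightarrow> bool" where
  "greedy_prec c j k \<longleftrightarrow> \<bar>c j\<bar> > \<bar>c k\<bar> \<or> (\<bar>c j\<bar> = \<bar>c k\<bar> \<and> j < k)"

text \<open>The first n indices rho(1),...,rho(n) of the natural greedy ordering.\<close>
definition greedy_set :: "(nat \<Rightarrow> real) \<Rightarrow> nat \<Rightarrow> nat set" where
  "greedy_set c n = {k. finite {j. greedy_prec c j k} \<and> card {j. greedy_prec c j k} < n}"

definition greedy_sum :: "real \<Rightarrow> (nat \<Rightarrow> nat \<Rightarrow> real) \<Rightarrow> nat \<Rightarrow> (nat \<Rightarrow> real) \<Rightarrow> nat \<Rightarrow> real" where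
  "greedy_sum p u n x = (\<lambda>i. \<Sum>k\<in>greedy_set (coef p u x) n. coef p u x k * u k i)"

text \<open>Uniform quasi-greedy bound (the standing assumption "semi-normalized basic
  sequence" is not part of this predicate; in the theorem it follows from the other conjuncts).\<close>
definition uniformly_quasi_greedy :: "real \<Rightarrow> (nat \<Rightarrow> nat \<Rightarrow> real) \<Rightarrow> bool" where
  "uniformly_quasi_greedy p u \<longleftrightarrow> (\<exists>B. \<forall>m\<ge>1. \<forall>x.
      x \<in> lp p \<and> (\<exists>a. has_expansion p u x a) \<and> lp_norm p x = 1 \<longrightarrow>
      lp_norm p (\<lambda>i. Max ((\<lambda>n. \<bar>greedy_sum p u n x i\<bar>) ` {1..m})) \<le> B)"

end

theory Submission
  imports Defs
begin


lemma powr_superadd: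
  fixes a b s :: real
  assumes "a \<ge> 0" "b \<ge> 0" "s \<ge> 1"
  shows "a powr s + b powr s \<le> (a + b) powr s"
proof (cases "a + b = 0")
  case True
  then have "a = 0" "b = 0" using assms by auto
  then show ?thesis by simp
next
  case False
  then have ab: "a + b > 0" using assms by auto
  have e: "x powr s = x * x powr (s - 1)" if "x \<ge> 0" for x :: real
  proof (cases "x = 0")
    case True then show ?thesis by simp
  next
    case False
    then have "x > 0" using that by auto
    then show ?thesis by (simp add: powr_diff)
  qed
  have "a powr s \<le> a * (a + b) powr (s - 1)"
    using e[of a] assms by (auto intro!: mult_left_mono powr_mono2)
  moreover have "b powr s \<le> b * (a + b) powr (s - 1)"
    using e[of b] assms by (auto intro!: mult_left_mono powr_mono2)
  ultimately have "a powr s + b powr s \<le> (a + b) * (a + b) powr (s - 1)"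
    by (simp add: distrib_right)
  also have "\<dots> = (a + b) powr s" using e[of "a+b"] ab by simp
  finally show ?thesis .
qed

lemma powr_midconvex:
  fixes a b s :: real
  assumes "a \<ge> 0" "b \<ge> 0" "s \<ge> 1"
  shows "((a + b) / 2) powr s \<le> (a powr s + b powr s) / 2"
proof (cases "a > 0 \<and> b > 0")
  case True
  have "convex_on {0<..} (\<lambda>x. x powr s)" using powr_convex assms(3) by blast
  from convex_onD[OF this, of "1/2" a b] True
  show ?thesis by (simp add: field_simps)
next
  case False
  have h2: "(2::real) \<le> 2 powr s"
    using powr_mono[of 1 s 2] assms by simp
  have key: "(x / 2) powr s \<le> x powr s / 2" if "x \<ge> 0" for x :: real
  proof -
    have "(x / 2) powr s = x powr s / 2 powr s" using that by (simp add: powr_divide)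
    also have "\<dots> \<le> x powr s / 2"
      using h2 by (intro divide_left_mono) auto
    finally show ?thesis .
  qed
  from False assms consider "a = 0" | "b = 0" by fastforce
  then show ?thesis
  proof cases
    case 1 then show ?thesis using key[of b] assms by simp
  next
    case 2 then show ?thesis using key[of a] assms by simp
  qed
qed

lemma clarkson:
  fixes x y r :: real
  assumes "r \<ge> 2"
  shows "\<bar>(x + y) / 2\<bar> powr r + \<bar>(x - y) / 2\<bar> powr r \<le> (\<bar>x\<bar> powr r + \<bar>y\<bar> powr r) / 2"
proof -
  define s where "s = r / 2"
  have s1: "s \<ge> 1" using assms by (simp add: s_def)
  have sq: "\<bar>z\<bar> powr r = (z\<^sup>2) powr s" for z :: real
  proof -
    have e: "z\<^sup>2 = \<bar>z\<bar> powr 2"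
      by (cases "z = 0") (auto simp: powr_numeral)
    have "(z\<^sup>2) powr s = (\<bar>z\<bar> powr 2) powr s" by (subst e) (rule refl)
    also have "\<dots> = \<bar>z\<bar> powr r" by (simp only: powr_powr s_def) simp
    finally show ?thesis by simp
  qed
  have "\<bar>(x + y) / 2\<bar> powr r + \<bar>(x - y) / 2\<bar> powr r
        = (((x + y) / 2)\<^sup>2) powr s + (((x - y) / 2)\<^sup>2) powr s" by (simp only: sq)
  also have "\<dots> \<le> (((x + y) / 2)\<^sup>2 + ((x - y) / 2)\<^sup>2) powr s"
    by (rule powr_superadd) (use s1 in auto)
  also have "((x + y) / 2)\<^sup>2 + ((x - y) / 2)\<^sup>2 = (x\<^sup>2 + y\<^sup>2) / 2"
    by (simp add: power2_eq_square field_simps)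
  also have "((x\<^sup>2 + y\<^sup>2) / 2) powr s \<le> ((x\<^sup>2) powr s + (y\<^sup>2) powr s) / 2"
    by (rule powr_midconvex) (use s1 in auto)
  also have "\<dots> = (\<bar>x\<bar> powr r + \<bar>y\<bar> powr r) / 2" by (simp only: sq)
  finally show ?thesis .
qed

lemma abs_add_powr_le:
  fixes s t p :: real
  assumes "p > 0"
  shows "\<bar>s + t\<bar> powr p \<le> 2 powr p * (\<bar>s\<bar> powr p + \<bar>t\<bar> powr p)"
proof -
  have "\<bar>s + t\<bar> \<le> 2 * max \<bar>s\<bar> \<bar>t\<bar>" by auto
  then have "\<bar>s + t\<bar> powr p \<le> (2 * max \<bar>s\<bar> \<bar>t\<bar>) powr p"
    using assms by (intro powr_mono2) auto
  also have "\<dots> = 2 powr p * (max \<bar>s\<bar> \<bar>t\<bar>) powr p" by (simp add: powr_mult)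
  also have "(max \<bar>s\<bar> \<bar>t\<bar>) powr p \<le> \<bar>s\<bar> powr p + \<bar>t\<bar> powr p"
    by (cases "\<bar>s\<bar> \<le> \<bar>t\<bar>") (auto simp: max_def)
  finally show ?thesis by (simp add: mult_left_mono)
qed

lemma holder_sum:
  fixes f g :: "'a \<Rightarrow> real" and p q :: real
  assumes fin: "finite S" and pq: "p > 1" "q > 1" "1/p + 1/q = 1"
    and f0: "\<And>i. i \<in> S \<Longrightarrow> f i \<ge> 0" and g0: "\<And>i. i \<in> S \<Longrightarrow> g i \<ge> 0"
  shows "(\<Sum>i\<in>S. f i * g i) \<le> (\<Sum>i\<in>S. f i powr p) powr (1/p) * (\<Sum>i\<in>S. g i powr q) powr (1/q)"
proof -
  define A where "A = (\<Sum>i\<in>S. f i powr p)"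
  define B where "B = (\<Sum>i\<in>S. g i powr q)"
  have A0: "A \<ge> 0" and B0: "B \<ge> 0" unfolding A_def B_def by (auto intro!: sum_nonneg)
  show ?thesis
  proof (cases "A = 0 \<or> B = 0")
    case True
    then have "(\<Sum>i\<in>S. f i * g i) = 0"
    proof
      assume "A = 0"
      then have "\<forall>i\<in>S. f i powr p = 0" unfolding A_def using fin by (subst (asm) sum_nonneg_eq_0_iff) auto
      then have "\<forall>i\<in>S. f i = 0" by simp
      then show ?thesis by simp
    next
      assume "B = 0"
      then have "\<forall>i\<in>S. g i powr q = 0" unfolding B_def using fin by (subst (asm) sum_nonneg_eq_0_iff) auto
      then have "\<forall>i\<in>S. g i = 0" by simp
      then show ?thesis by simp
    qed
    then show ?thesis using True by (auto simp: A_def[symmetric] B_def[symmetric])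
  next
    case False
    then have Ap: "A > 0" and Bp: "B > 0" using A0 B0 by auto
    define a where "a = A powr (1/p)"
    define b where "b = B powr (1/q)"
    have ap: "a > 0" and bp: "b > 0" using Ap Bp by (auto simp: a_def b_def)
    have apow: "a powr p = A" using Ap pq by (simp add: a_def powr_powr)
    have bpow: "b powr q = B" using Bp pq by (simp add: b_def powr_powr)
    have "(\<Sum>i\<in>S. (f i / a) * (g i / b)) \<le> (\<Sum>i\<in>S. (f i / a) powr p / p + (g i / b) powr q / q)"
      using f0 g0 ap bp pq by (intro sum_mono Youngs_inequality) auto
    also have "\<dots> = (\<Sum>i\<in>S. f i powr p) / (a powr p) / p + (\<Sum>i\<in>S. g i powr q) / (b powr q) / q"
      using f0 g0 ap bp
      by (simp add: sum.distrib powr_divide sum_divide_distrib)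
    also have "\<dots> = 1/p + 1/q" using Ap Bp by (simp add: apow bpow A_def[symmetric] B_def[symmetric])
    also have "\<dots> = 1" using pq by simp
    finally have "(\<Sum>i\<in>S. f i * g i) / (a * b) \<le> 1"
      by (simp add: sum_divide_distrib[symmetric] field_simps)
    then show ?thesis using ap bp by (simp add: a_def[symmetric] b_def[symmetric] A_def[symmetric] B_def[symmetric] field_simps)
  qed
qed



definition hsum :: "(nat \<Rightarrow> real) \<Rightarrow> nat \<Rightarrow> nat \<Rightarrow> real" where
  "hsum a t j = (\<Sum>x\<in>{j * 2 ^ t..<Suc j * 2 ^ t}. a x)"

lemma hsum_split: "hsum a (Suc t) j = hsum a t (2 * j) + hsum a t (Suc (2 * j))"
proof -
  have "hsum a t (2 * j) + hsum a t (Suc (2 * j))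
      = (\<Sum>x\<in>{2 * j * 2 ^ t..<Suc (2 * j) * 2 ^ t}. a x) + (\<Sum>x\<in>{Suc (2 * j) * 2 ^ t..<Suc (Suc (2 * j)) * 2 ^ t}. a x)"
    by (simp add: hsum_def)
  also have "\<dots> = (\<Sum>x\<in>{2 * j * 2 ^ t..<Suc (Suc (2 * j)) * 2 ^ t}. a x)"
    by (rule sum.atLeastLessThan_concat) auto
  also have "{2 * j * 2 ^ t..<Suc (Suc (2 * j)) * 2 ^ t} = {j * 2 ^ Suc t..<Suc j * 2 ^ Suc t}"
    by (simp add: algebra_simps)
  finally show ?thesis by (simp add: hsum_def)
qed

lemma hsum_0: "hsum a 0 j = a j"
  by (simp add: hsum_def)

lemma sum_double: "(\<Sum>j<2 * n. f j) = (\<Sum>j<n. f (2 * j) + f (Suc (2 * j)))"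
  by (induction n) (simp_all add: algebra_simps)

definition Phi :: "nat \<Rightarrow> (nat \<Rightarrow> real) \<Rightarrow> real \<Rightarrow> nat \<Rightarrow> real" where
  "Phi k a r t = (\<Sum>j<2 ^ (k - t). 2 ^ t * \<bar>hsum a t j / 2 ^ t\<bar> powr r)"

definition lev :: "nat \<Rightarrow> (nat \<Rightarrow> real) \<Rightarrow> real \<Rightarrow> nat \<Rightarrow> real" where
  "lev k a r t = (\<Sum>j<2 ^ (k - Suc t). 2 ^ Suc t * \<bar>(hsum a t (2 * j) - hsum a t (Suc (2 * j))) / 2 ^ Suc t\<bar> powr r)"

lemma Phi_step:
  assumes "t < k" "r \<ge> 2"
  shows "Phi k a r (Suc t) + lev k a r t \<le> Phi k a r t"
proof -
  have e: "(2::nat) ^ (k - t) = 2 * 2 ^ (k - Suc t)"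
    using assms by (metis Suc_diff_Suc power_Suc)
  have "Phi k a r t = (\<Sum>j<2 ^ (k - Suc t). 2 ^ t * \<bar>hsum a t (2 * j) / 2 ^ t\<bar> powr r
            + 2 ^ t * \<bar>hsum a t (Suc (2 * j)) / 2 ^ t\<bar> powr r)"
    unfolding Phi_def e by (rule sum_double)
  moreover have "Phi k a r (Suc t) + lev k a r t = (\<Sum>j<2 ^ (k - Suc t).
      2 ^ Suc t * \<bar>(hsum a t (2 * j) + hsum a t (Suc (2 * j))) / 2 ^ Suc t\<bar> powr r
    + 2 ^ Suc t * \<bar>(hsum a t (2 * j) - hsum a t (Suc (2 * j))) / 2 ^ Suc t\<bar> powr r)"
    by (simp add: Phi_def lev_def hsum_split sum.distrib)
  moreover have "2 ^ Suc t * \<bar>(X + Y) / 2 ^ Suc t\<bar> powr r + 2 ^ Suc t * \<bar>(X - Y) / 2 ^ Suc t\<bar> powr r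
      \<le> 2 ^ t * \<bar>X / 2 ^ t\<bar> powr r + 2 ^ t * \<bar>Y / 2 ^ t\<bar> powr r" for X Y :: real
  proof -
    have c: "\<bar>(X / 2 ^ t + Y / 2 ^ t) / 2\<bar> powr r + \<bar>(X / 2 ^ t - Y / 2 ^ t) / 2\<bar> powr r
        \<le> (\<bar>X / 2 ^ t\<bar> powr r + \<bar>Y / 2 ^ t\<bar> powr r) / 2"
      by (rule clarkson) (use assms in auto)
    have e1: "(X / 2 ^ t + Y / 2 ^ t) / 2 = (X + Y) / 2 ^ Suc t"
      by (simp add: field_simps)
    have e2: "(X / 2 ^ t - Y / 2 ^ t) / 2 = (X - Y) / 2 ^ Suc t"
      by (simp add: field_simps)
    from c have "2 ^ Suc t * (\<bar>(X + Y) / 2 ^ Suc t\<bar> powr r + \<bar>(X - Y) / 2 ^ Suc t\<bar> powr r)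
        \<le> 2 ^ Suc t * ((\<bar>X / 2 ^ t\<bar> powr r + \<bar>Y / 2 ^ t\<bar> powr r) / 2)"
      unfolding e1 e2 by (intro mult_left_mono) auto
    then show ?thesis by (simp add: algebra_simps)
  qed
  ultimately show ?thesis by (simp only:) (rule sum_mono)
qed

lemma Phi_nonneg: "Phi k a r t \<ge> 0"
  unfolding Phi_def by (intro sum_nonneg) auto

lemma Phi_telescope:
  assumes "m \<le> k" "r \<ge> 2"
  shows "Phi k a r m + (\<Sum>t<m. lev k a r t) \<le> Phi k a r 0"
  using assms
proof (induction m)
  case 0 then show ?case by simp
next
  case (Suc m)
  have "Phi k a r (Suc m) + lev k a r m \<le> Phi k a r m"
    using Suc.prems by (intro Phi_step) auto
  then show ?case using Suc by simp
qed

lemma Phi_0: "Phi k a r 0 = (\<Sum>x<2 ^ k. \<bar>a x\<bar> powr r)"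
  by (simp add: Phi_def hsum_0)

lemma lev_sum_bound:
  assumes "r \<ge> 2"
  shows "(\<Sum>t<k. lev k a r t) \<le> (\<Sum>x<2 ^ k. \<bar>a x\<bar> powr r)"
  using Phi_telescope[of k k r a] Phi_nonneg[of k a r k] assms Phi_0 by simp



definition act :: "nat \<Rightarrow> nat \<Rightarrow> nat \<Rightarrow> bool" where
  "act k M t \<longleftrightarrow> t < k \<and> M < 2 ^ k \<and> M mod 2 ^ Suc t = 2 ^ t"

definition hh :: "nat \<Rightarrow> nat \<Rightarrow> nat \<Rightarrow> real" where
  "hh M t x = (if M - 2 ^ t \<le> x \<and> x < M then 1 else if M \<le> x \<and> x < M + 2 ^ t then -1 else 0)"

definition kern :: "nat \<Rightarrow> nat \<Rightarrow> nat \<Rightarrow> nat \<Rightarrow> nat \<Rightarrow> nat \<Rightarrow> real" where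
  "kern k s M t c x = (if act k M t \<and> c < 2 ^ t then (if s = 0 then 1 else -1) / 2 ^ Suc t * hh M t x else 0)"

lemma act_set:
  assumes "t < k"
  shows "{M \<in> {..<(2::nat) ^ k}. M mod 2 ^ Suc t = 2 ^ t} = (\<lambda>j. 2 ^ Suc t * j + 2 ^ t) ` {..<2 ^ (k - Suc t)}"
proof -
  define D :: nat where "D = 2 ^ t"
  define E :: nat where "E = 2 ^ (k - Suc t)"
  have D0: "D > 0" by (simp add: D_def)
  have k2: "(2::nat) ^ k = 2 * D * E"
    using assms unfolding D_def E_def
    by (metis Suc_leI le_add_diff_inverse power_Suc power_add mult.assoc)
  have s2: "(2::nat) ^ Suc t = 2 * D" by (simp add: D_def)
  show ?thesis unfolding k2 s2 D_def[symmetric] E_def[symmetric]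
  proof (intro set_eqI iffI)
    fix M assume "M \<in> {M \<in> {..<2 * D * E}. M mod (2 * D) = D}"
    then have M: "M < 2 * D * E" "M mod (2 * D) = D" by auto
    have "M = 2 * D * (M div (2 * D)) + D" using M(2) by (metis div_mult_mod_eq mult.commute)
    moreover have "M div (2 * D) < E" using M(1) by (simp add: less_mult_imp_div_less mult.commute)
    ultimately show "M \<in> (\<lambda>j. 2 * D * j + D) ` {..<E}" by auto
  next
    fix M assume "M \<in> (\<lambda>j. 2 * D * j + D) ` {..<E}"
    then obtain j where j: "j < E" "M = 2 * D * j + D" by auto
    have "2 * D * j + D < 2 * D * (j + 1)" using D0 by simp
    also have "\<dots> \<le> 2 * D * E" using j(1) by (intro mult_left_mono) auto
    finally have "M < 2 * D * E" using j by simp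
    moreover have "M mod (2 * D) = D" using j D0 by (simp add: add.commute)
    ultimately show "M \<in> {M \<in> {..<2 * D * E}. M mod (2 * D) = D}" by auto
  qed
qed

lemma act_reindex:
  assumes "t < k"
  shows "(\<Sum>M<(2::nat) ^ k. if M mod 2 ^ Suc t = 2 ^ t then F M else 0)
       = (\<Sum>j<2 ^ (k - Suc t). F (2 ^ Suc t * j + 2 ^ t))"
proof -
  have "(\<Sum>M<(2::nat) ^ k. if M mod 2 ^ Suc t = 2 ^ t then F M else 0)
      = sum F {M \<in> {..<(2::nat) ^ k}. M mod 2 ^ Suc t = 2 ^ t}"
    using sum.inter_filter[of "{..<(2::nat)^k}" F "\<lambda>M. M mod 2 ^ Suc t = 2 ^ t"] by simp
  also have "\<dots> = sum F ((\<lambda>j. 2 ^ Suc t * j + 2 ^ t) ` {..<2 ^ (k - Suc t)})"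
    using act_set[OF assms] by simp
  also have "\<dots> = (\<Sum>j<2 ^ (k - Suc t). F (2 ^ Suc t * j + 2 ^ t))"
    by (subst sum.reindex) (auto simp: inj_on_def)
  finally show ?thesis .
qed

lemma sum_indicator_ivl:
  assumes "B \<subseteq> A" "finite A"
  shows "(\<Sum>x\<in>A. if x \<in> B then f x else 0) = sum f B"
  using assms by (simp add: sum.inter_restrict[symmetric] Int_absorb1 inf.absorb2)

lemma hh_inner:
  assumes "M = 2 ^ Suc t * j + 2 ^ t" "M + 2 ^ t \<le> 2 ^ k"
  shows "(\<Sum>x<2 ^ k. hh M t x * a x) = hsum a t (2 * j) - hsum a t (Suc (2 * j))"
proof -
  have l: "M - 2 ^ t = 2 * j * 2 ^ t" "M = Suc (2 * j) * 2 ^ t" "M + 2 ^ t = Suc (Suc (2 * j)) * 2 ^ t"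
    using assms(1) by (simp_all add: algebra_simps)
  have "hh M t x * a x = (if x \<in> {M - 2 ^ t..<M} then a x else 0) - (if x \<in> {M..<M + 2 ^ t} then a x else 0)" for x
    by (auto simp: hh_def)
  then have "(\<Sum>x<2 ^ k. hh M t x * a x) = (\<Sum>x<2 ^ k. if x \<in> {M - 2 ^ t..<M} then a x else 0)
        - (\<Sum>x<2 ^ k. if x \<in> {M..<M + 2 ^ t} then a x else 0)"
    by (simp add: sum_subtractf)
  also have "(\<Sum>x<2 ^ k. if x \<in> {M - 2 ^ t..<M} then a x else 0) = sum a {M - 2 ^ t..<M}"
    using assms(2) by (intro sum_indicator_ivl) auto
  also have "(\<Sum>x<2 ^ k. if x \<in> {M..<M + 2 ^ t} then a x else 0) = sum a {M..<M + 2 ^ t}"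
    using assms(2) by (intro sum_indicator_ivl) auto
  also have "{M - 2 ^ t..<M} = {2 * j * 2 ^ t..<Suc (2 * j) * 2 ^ t}" using l by simp
  also have "{M..<M + 2 ^ t} = {Suc (2 * j) * 2 ^ t..<Suc (Suc (2 * j)) * 2 ^ t}" using l by simp
  also have "sum a {2 * j * 2 ^ t..<Suc (2 * j) * 2 ^ t} - sum a {Suc (2 * j) * 2 ^ t..<Suc (Suc (2 * j)) * 2 ^ t}
     = hsum a t (2 * j) - hsum a t (Suc (2 * j))"
    by (simp only: hsum_def)
  finally show ?thesis .
qed

lemma act_bounds:
  assumes "act k M t"
  shows "M = 2 ^ Suc t * (M div 2 ^ Suc t) + 2 ^ t" "M + 2 ^ t \<le> 2 ^ k" "2 ^ t \<le> M" "t < k"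
proof -
  from assms have a: "t < k" "M < 2 ^ k" "M mod 2 ^ Suc t = 2 ^ t" by (auto simp: act_def)
  show m: "M = 2 ^ Suc t * (M div 2 ^ Suc t) + 2 ^ t" using a(3) by (metis div_mult_mod_eq mult.commute)
  show "2 ^ t \<le> M" using m by linarith
  show "t < k" by fact
  define j where "j = M div 2 ^ Suc t"
  have "M \<in> {M \<in> {..<2 ^ k}. M mod 2 ^ Suc t = 2 ^ t}" using a by simp
  then obtain j' where j': "j' < 2 ^ (k - Suc t)" "M = 2 ^ Suc t * j' + 2 ^ t"
    using act_set[OF a(1)] by auto
  have "M div 2 ^ Suc t = j'" using j'(2) by simp
  then have "j < 2 ^ (k - Suc t)" using j' j_def by simp
  then have "Suc j \<le> 2 ^ (k - Suc t)" by simp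
  then have "2 ^ Suc t * Suc j \<le> 2 ^ Suc t * 2 ^ (k - Suc t)" by (intro mult_left_mono) auto
  also have "\<dots> = (2::nat) ^ k" using a(1) by (metis Suc_leI le_add_diff_inverse power_add)
  finally show "M + 2 ^ t \<le> 2 ^ k" using m j_def by simp
qed

lemma kern_contract:
  assumes "r \<ge> 2"
  shows "(\<Sum>s<2. \<Sum>M<2 ^ k. \<Sum>t<k. \<Sum>c<2 ^ k. \<bar>\<Sum>x<2 ^ k. kern k s M t c x * a x\<bar> powr r)
         \<le> (\<Sum>x<2 ^ k. \<bar>a x\<bar> powr r)"
proof -
  define V where "V M t = (\<bar>\<Sum>x<2 ^ k. hh M t x * a x\<bar> / 2 ^ Suc t) powr r" for M t
  have inner: "\<bar>\<Sum>x<2 ^ k. kern k s M t c x * a x\<bar> powr r = (if act k M t \<and> c < 2 ^ t then V M t else 0)"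
    for s M t c
  proof (cases "act k M t \<and> c < 2 ^ t")
    case True
    define sg :: real where "sg = (if s = 0 then 1 else -1)"
    have sg1: "\<bar>sg\<bar> = 1" by (simp add: sg_def)
    have "(\<Sum>x<2 ^ k. kern k s M t c x * a x) = (\<Sum>x<2 ^ k. (sg / 2 ^ Suc t) * (hh M t x * a x))"
      using True by (intro sum.cong) (simp_all add: kern_def sg_def)
    also have "\<dots> = (sg / 2 ^ Suc t) * (\<Sum>x<2 ^ k. hh M t x * a x)"
      by (simp add: sum_distrib_left)
    finally have "\<bar>\<Sum>x<2 ^ k. kern k s M t c x * a x\<bar> = \<bar>\<Sum>x<2 ^ k. hh M t x * a x\<bar> / 2 ^ Suc t"
      using sg1 by (simp add: abs_mult)
    then show ?thesis using True by (simp add: V_def)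
  next
    case False
    then have "\<forall>x. kern k s M t c x = 0" unfolding kern_def by auto
    then show ?thesis using False by (simp del: de_Morgan_conj)
  qed
  have csum: "(\<Sum>c<(2::nat) ^ k. if act k M t \<and> c < 2 ^ t then V M t else 0) = (if act k M t then 2 ^ t * V M t else 0)"
    for M t
  proof (cases "act k M t")
    case True
    then have "t < k" by (simp add: act_def)
    then have "(2::nat) ^ t \<le> 2 ^ k" by (intro power_increasing) auto
    then have "{c \<in> {..<(2::nat) ^ k}. c < 2 ^ t} = {..<2 ^ t}" by (auto intro: less_le_trans)
    then have "(\<Sum>c<(2::nat) ^ k. if c < 2 ^ t then V M t else 0) = (\<Sum>c<(2::nat) ^ t. V M t)"
      by (simp add: sum.inter_filter[symmetric])
    then show ?thesis using True by simp
  qed simp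
  have "(\<Sum>s<2. \<Sum>M<2 ^ k. \<Sum>t<k. \<Sum>c<2 ^ k. \<bar>\<Sum>x<2 ^ k. kern k s M t c x * a x\<bar> powr r)
      = (\<Sum>s<(2::nat). \<Sum>M<2 ^ k. \<Sum>t<k. if act k M t then 2 ^ t * V M t else 0)"
    by (simp add: inner csum)
  also have "\<dots> = (\<Sum>M<2 ^ k. \<Sum>t<k. if act k M t then 2 ^ Suc t * V M t else 0)"
    by (simp add: sum_distrib_left mult.assoc if_distrib cong: if_cong)
  also have "\<dots> = (\<Sum>t<k. \<Sum>M<2 ^ k. if act k M t then 2 ^ Suc t * V M t else 0)"
    by (rule sum.swap)
  also have "\<dots> = (\<Sum>t<k. lev k a r t)"
  proof (rule sum.cong[OF refl])
    fix t assume "t \<in> {..<k}"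
    then have tk: "t < k" by simp
    have "(\<Sum>M<2 ^ k. if act k M t then 2 ^ Suc t * V M t else 0)
        = (\<Sum>M<2 ^ k. if M mod 2 ^ Suc t = 2 ^ t then 2 ^ Suc t * V M t else 0)"
      using tk by (intro sum.cong) (auto simp: act_def)
    also have "\<dots> = (\<Sum>j<2 ^ (k - Suc t). 2 ^ Suc t * V (2 ^ Suc t * j + 2 ^ t) t)"
      by (rule act_reindex[OF tk])
    also have "\<dots> = lev k a r t"
      unfolding lev_def
    proof (rule sum.cong[OF refl])
      fix j :: nat assume "j \<in> {..<2 ^ (k - Suc t)}"
      then have "(2::nat) ^ Suc t * j + 2 ^ t \<in> {M \<in> {..<2 ^ k}. M mod 2 ^ Suc t = 2 ^ t}"
        using act_set[OF tk] by blast
      then have "act k (2 ^ Suc t * j + 2 ^ t) t" using tk by (simp add: act_def)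
      from act_bounds(2)[OF this] have "2 ^ Suc t * j + 2 ^ t + 2 ^ t \<le> (2::nat) ^ k" .
      then have "(\<Sum>x<2 ^ k. hh (2 ^ Suc t * j + 2 ^ t) t x * a x) = hsum a t (2 * j) - hsum a t (Suc (2 * j))"
        by (intro hh_inner) auto
      then show "2 ^ Suc t * V (2 ^ Suc t * j + 2 ^ t) t
          = 2 ^ Suc t * \<bar>(hsum a t (2 * j) - hsum a t (Suc (2 * j))) / 2 ^ Suc t\<bar> powr r"
        by (simp add: V_def)
    qed
    finally show "(\<Sum>M<2 ^ k. if act k M t then 2 ^ Suc t * V M t else 0) = lev k a r t" .
  qed
  also have "\<dots> \<le> (\<Sum>x<2 ^ k. \<bar>a x\<bar> powr r)" by (rule lev_sum_bound[OF assms])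
  finally show ?thesis .
qed



lemma conj_exp:
  fixes p q :: real
  assumes "p > 1" "1/p + 1/q = 1"
  shows "q = p / (p - 1)" "q > 1" "(p - 1) * q = p"
proof -
  have "1/q = 1 - 1/p" using assms by simp
  also have "\<dots> = (p - 1) / p" using assms by (simp add: field_simps)
  finally have "1/q = (p - 1)/p" .
  then show q: "q = p / (p - 1)" using assms
    by (metis divide_divide_eq_right div_by_1 divide_inverse inverse_divide mult.left_neutral)
  show "q > 1" using assms by (simp add: q field_simps)
  show "(p - 1) * q = p" using assms by (simp add: q)
qed

lemma dual_contract:
  fixes K :: "'y \<Rightarrow> 'x \<Rightarrow> real" and p q :: real
  assumes X: "finite X" and Y: "finite Y" and pq: "p > 1" "1/p + 1/q = 1"
    and H: "\<And>a. (\<Sum>y\<in>Y. \<bar>\<Sum>x\<in>X. K y x * a x\<bar> powr q) \<le> (\<Sum>x\<in>X. \<bar>a x\<bar> powr q)"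
  shows "(\<Sum>x\<in>X. \<bar>\<Sum>y\<in>Y. K y x * b y\<bar> powr p) \<le> (\<Sum>y\<in>Y. \<bar>b y\<bar> powr p)"
proof -
  have q1: "q > 1" and pq1: "(p - 1) * q = p" using conj_exp[OF pq] by auto
  define z where "z x = (\<Sum>y\<in>Y. K y x * b y)" for x
  define w where "w x = sgn (z x) * \<bar>z x\<bar> powr (p - 1)" for x
  define Z where "Z = (\<Sum>x\<in>X. \<bar>z x\<bar> powr p)"
  define Bn where "Bn = (\<Sum>y\<in>Y. \<bar>b y\<bar> powr p)"
  have Z0: "Z \<ge> 0" and B0: "Bn \<ge> 0" by (auto simp: Z_def Bn_def intro!: sum_nonneg)
  have zw: "z x * w x = \<bar>z x\<bar> powr p" for x
  proof (cases "z x = 0")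
    case False
    then have zp: "\<bar>z x\<bar> > 0" by simp
    have zs: "z x * sgn (z x) = \<bar>z x\<bar>" by (cases "z x > 0") (auto simp: sgn_if)
    have "\<bar>z x\<bar> powr p = \<bar>z x\<bar> powr (1 + (p - 1))" by simp
    also have "\<dots> = \<bar>z x\<bar> powr 1 * \<bar>z x\<bar> powr (p - 1)" by (rule powr_add)
    also have "\<bar>z x\<bar> powr 1 = \<bar>z x\<bar>" by simp
    finally have "\<bar>z x\<bar> powr p = \<bar>z x\<bar> * \<bar>z x\<bar> powr (p - 1)" .
    moreover have "z x * w x = (z x * sgn (z x)) * \<bar>z x\<bar> powr (p - 1)"
      unfolding w_def by (simp only: mult.assoc)
    ultimately show ?thesis using zs by simp
  qed (simp add: w_def)
  have wq: "\<bar>w x\<bar> powr q = \<bar>z x\<bar> powr p" for x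
  proof -
    have "\<bar>w x\<bar> = \<bar>z x\<bar> powr (p - 1)"
      by (cases "z x = 0") (auto simp: w_def abs_mult abs_sgn_eq)
    then show ?thesis using pq1 by (simp add: powr_powr)
  qed
  have "Z = (\<Sum>x\<in>X. z x * w x)" by (simp add: Z_def zw)
  also have "\<dots> = (\<Sum>x\<in>X. \<Sum>y\<in>Y. b y * (K y x * w x))"
    unfolding z_def sum_distrib_right by (intro sum.cong refl) (simp only: mult_ac)
  also have "\<dots> = (\<Sum>y\<in>Y. \<Sum>x\<in>X. b y * (K y x * w x))" by (rule sum.swap)
  also have "\<dots> = (\<Sum>y\<in>Y. b y * (\<Sum>x\<in>X. K y x * w x))"
    by (simp only: sum_distrib_left)
  also have "\<dots> \<le> (\<Sum>y\<in>Y. \<bar>b y\<bar> * \<bar>\<Sum>x\<in>X. K y x * w x\<bar>)"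
    by (intro sum_mono) (simp add: abs_mult[symmetric])
  also have "\<dots> \<le> (\<Sum>y\<in>Y. \<bar>b y\<bar> powr p) powr (1/p) * (\<Sum>y\<in>Y. \<bar>\<Sum>x\<in>X. K y x * w x\<bar> powr q) powr (1/q)"
    by (rule holder_sum) (use Y pq q1 in auto)
  also have "\<dots> \<le> Bn powr (1/p) * (\<Sum>x\<in>X. \<bar>w x\<bar> powr q) powr (1/q)"
    unfolding Bn_def using H[of w] q1
    by (intro mult_left_mono powr_mono2) (auto intro!: sum_nonneg)
  also have "(\<Sum>x\<in>X. \<bar>w x\<bar> powr q) = Z" by (simp add: wq Z_def)
  finally have ZB: "Z \<le> Bn powr (1/p) * Z powr (1/q)" .
  show ?thesis
  proof (cases "Z = 0")
    case True then show ?thesis using B0 unfolding Z_def z_def Bn_def by simp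
  next
    case False
    then have Zp: "Z > 0" using Z0 by simp
    have "Z = Z powr (1/p) * Z powr (1/q)" using Zp pq by (simp add: powr_add[symmetric])
    then have "Z powr (1/p) * Z powr (1/q) \<le> Bn powr (1/p) * Z powr (1/q)" using ZB by simp
    moreover have "Z powr (1/q) > 0" using Zp by simp
    ultimately have "Z powr (1/p) \<le> Bn powr (1/p)" by simp
    then have "Z \<le> Bn"
      using powr_less_mono2[of "1/p" Bn Z] pq B0 by force
    then show ?thesis by (simp add: Z_def Bn_def z_def)
  qed
qed

lemma power_mean_sum:
  fixes z :: "'a \<Rightarrow> real" and p :: real
  assumes "finite S" "p > 1" "\<And>i. i \<in> S \<Longrightarrow> z i \<ge> 0"
  shows "(\<Sum>i\<in>S. z i) powr p \<le> real (card S) powr (p - 1) * (\<Sum>i\<in>S. z i powr p)"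
proof -
  define q where "q = p / (p - 1)"
  have pq: "1/p + 1/q = 1" using assms by (simp add: q_def field_simps)
  have q1: "q > 1" using assms by (simp add: q_def field_simps)
  have "(\<Sum>i\<in>S. z i * 1) \<le> (\<Sum>i\<in>S. z i powr p) powr (1/p) * (\<Sum>i\<in>S. (1::real) powr q) powr (1/q)"
    by (rule holder_sum) (use assms q1 pq in auto)
  then have h: "(\<Sum>i\<in>S. z i) \<le> (\<Sum>i\<in>S. z i powr p) powr (1/p) * real (card S) powr (1/q)" by simp
  have s0: "(\<Sum>i\<in>S. z i) \<ge> 0" using assms by (auto intro!: sum_nonneg)
  have t0: "(\<Sum>i\<in>S. z i powr p) \<ge> 0" by (auto intro!: sum_nonneg)
  have "(\<Sum>i\<in>S. z i) powr p \<le> ((\<Sum>i\<in>S. z i powr p) powr (1/p) * real (card S) powr (1/q)) powr p"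
    using h s0 assms by (intro powr_mono2) auto
  also have "\<dots> = (\<Sum>i\<in>S. z i powr p) * real (card S) powr (p / q)"
    using assms t0 by (simp add: powr_mult powr_powr)
  also have "p / q = p - 1" using assms by (simp add: q_def)
  finally show ?thesis by (simp add: mult.commute)
qed



definition Lb :: "nat \<Rightarrow> nat" where "Lb k = 2 ^ k + 2 * 2 ^ k * k * 2 ^ k"
definition St :: "nat \<Rightarrow> nat" where "St k = (\<Sum>i<k. Lb i)"
definition blk :: "nat \<Rightarrow> nat" where "blk n = (LEAST k. n < St (Suc k))"
definition loc :: "nat \<Rightarrow> nat" where "loc n = n - St (blk n)"

lemma Lb_pos: "Lb k \<ge> 1"
  unfolding Lb_def using one_le_power[of "2::nat" k] by linarith

lemma St_Suc: "St (Suc k) = St k + Lb k" by (simp add: St_def)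

lemma St_mono: "a \<le> b \<Longrightarrow> St a \<le> St b"
  unfolding St_def by (intro sum_mono2) auto

lemma St_ge: "St k \<ge> k"
proof -
  have "St k \<ge> (\<Sum>i<k. 1)" unfolding St_def using Lb_pos by (intro sum_mono) auto
  then show ?thesis by simp
qed

lemma St_less: "a < b \<Longrightarrow> St a < St b"
proof -
  assume "a < b"
  then have "St (Suc a) \<le> St b" by (intro St_mono) auto
  then show ?thesis using St_Suc[of a] Lb_pos[of a] by simp
qed

lemma blk_props: "St (blk n) \<le> n" "n < St (Suc (blk n))"
proof -
  have ex: "n < St (Suc n)" using St_ge[of "Suc n"] by simp
  show b: "n < St (Suc (blk n))" unfolding blk_def by (rule LeastI[of _ n]) (rule ex)
  show "St (blk n) \<le> n"
  proof (cases "blk n")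
    case 0 then show ?thesis by (simp add: St_def)
  next
    case (Suc k')
    then have "k' < blk n" by simp
    then have "\<not> n < St (Suc k')" unfolding blk_def by (rule not_less_Least)
    then show ?thesis using Suc by simp
  qed
qed

lemma blk_eq: "St k \<le> n \<Longrightarrow> n < St (Suc k) \<Longrightarrow> blk n = k"
proof -
  assume a: "St k \<le> n" "n < St (Suc k)"
  show "blk n = k"
  proof (rule ccontr)
    assume "blk n \<noteq> k"
    then consider "blk n < k" | "blk n > k" by linarith
    then show False
    proof cases
      case 1
      then have "St (Suc (blk n)) \<le> St k" by (intro St_mono) auto
      then show False using blk_props(2)[of n] a by simp
    next
      case 2
      then have "St (Suc k) \<le> St (blk n)" by (intro St_mono) auto
      then show False using blk_props(1)[of n] a by simp
    qed
  qed
qed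

lemma blk_St: "r < Lb k \<Longrightarrow> blk (St k + r) = k"
  by (rule blk_eq) (auto simp: St_Suc)

lemma loc_St: "r < Lb k \<Longrightarrow> loc (St k + r) = r"
  by (simp add: loc_def blk_St)

lemma St_loc: "St (blk n) + loc n = n"
  using blk_props(1)[of n] by (simp add: loc_def)

lemma loc_less: "loc n < Lb (blk n)"
  using blk_props[of n] by (simp add: loc_def St_Suc)

lemma blk_ge: "St K \<le> i \<Longrightarrow> K \<le> blk i"
proof (rule ccontr)
  assume a: "St K \<le> i" "\<not> K \<le> blk i"
  then have "St (Suc (blk i)) \<le> St K" by (intro St_mono) auto
  then show False using a blk_props(2)[of i] by simp
qed

lemma blk_lt: "i < St K \<Longrightarrow> blk i < K"
proof (rule ccontr)
  assume a: "i < St K" "\<not> blk i < K"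
  then have "St K \<le> St (blk i)" by (intro St_mono) auto
  then show False using a blk_props(1)[of i] by simp
qed

lemma sum_lessThan_add: fixes a b :: nat shows "(\<Sum>j<a + b. f j) = (\<Sum>j<a. f j) + (\<Sum>r<b. f (a + r))"
  by (induction b) (simp_all add: add.assoc)

lemma sum_ivl_shift: fixes a b :: nat shows "(\<Sum>j\<in>{a..<a + b}. f j) = (\<Sum>r<b. f (a + r))"
  by (induction b) (simp_all add: add.assoc)

lemma sum_blocks: "(\<Sum>i<St K. f i) = (\<Sum>k<K. \<Sum>r<Lb k. f (St k + r))"
  by (induction K) (simp_all add: St_Suc sum_lessThan_add, simp add: St_def)

lemma sum_zero_tail:
  fixes A B :: nat
  assumes "A \<le> B" "\<And>j. A \<le> j \<Longrightarrow> j < B \<Longrightarrow> f j = 0"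
  shows "(\<Sum>j<B. f j) = (\<Sum>j<A. f j)"
proof -
  have "B = A + (B - A)" using assms by simp
  then have "(\<Sum>j<B. f j) = (\<Sum>j<A. f j) + (\<Sum>r<B - A. f (A + r))"
    by (metis sum_lessThan_add)
  also have "(\<Sum>r<B - A. f (A + r)) = 0" using assms by (intro sum.neutral) auto
  finally show ?thesis by simp
qed

lemma lp_norm_finite:
  fixes A :: nat
  assumes "\<And>i. A \<le> i \<Longrightarrow> f i = 0"
  shows "lp_norm p f = (\<Sum>i<A. \<bar>f i\<bar> powr p) powr (1/p)"
proof -
  have "(\<Sum>i. \<bar>f i\<bar> powr p) = (\<Sum>i<A. \<bar>f i\<bar> powr p)"
  proof (rule suminf_finite)
    fix n assume "n \<notin> {..<A}"
    then show "\<bar>f n\<bar> powr p = 0" using assms by simp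
  qed simp
  then show ?thesis by (simp add: lp_norm_def)
qed

lemma lp_finite:
  fixes A :: nat
  assumes "\<And>i. A \<le> i \<Longrightarrow> f i = 0"
  shows "f \<in> lp p"
  unfolding lp_def
proof (intro CollectI summable_finite[of "{..<A}"])
  fix n assume "n \<notin> {..<A}"
  then show "\<bar>f n\<bar> powr p = 0" using assms by simp
qed simp



locale blocksys =
  fixes p :: real and G :: "nat \<Rightarrow> nat \<Rightarrow> nat \<Rightarrow> real"
  assumes p1: "p > 1"
    and Gnil: "\<And>k i j l. G k i j \<noteq> 0 \<Longrightarrow> G k j l = 0"
    and Gcon: "\<And>k \<beta>. (\<Sum>i<Lb k. \<bar>\<Sum>j<Lb k. G k i j * \<beta> j\<bar> powr p) \<le> (\<Sum>i<Lb k. \<bar>\<beta> i\<bar> powr p)"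
begin

definition GG :: "nat \<Rightarrow> nat \<Rightarrow> real" where
  "GG i j = (if blk i = blk j then G (blk i) (loc i) (loc j) else 0)"

definition uu :: "nat \<Rightarrow> nat \<Rightarrow> real" where
  "uu n i = (if i = n then 1 else 0) + GG i n"

definition Gm :: "(nat \<Rightarrow> real) \<Rightarrow> nat \<Rightarrow> real" where
  "Gm b i = (\<Sum>j<St (Suc (blk i)). GG i j * b j)"

definition Tm :: "(nat \<Rightarrow> real) \<Rightarrow> nat \<Rightarrow> real" where
  "Tm b i = b i + Gm b i"

definition Pr :: "nat \<Rightarrow> (nat \<Rightarrow> real) \<Rightarrow> nat \<Rightarrow> real" where
  "Pr n a j = (if j < n then a j else 0)"

lemma p0: "p > 0" using p1 by simp

lemma GG_nz: "GG i j \<noteq> 0 \<Longrightarrow> blk j = blk i"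
  by (auto simp: GG_def split: if_splits)

lemma GG_nz2: "GG i j \<noteq> 0 \<Longrightarrow> St (blk i) \<le> j \<and> j < St (Suc (blk i))"
  using GG_nz blk_props by metis

lemma Gm_block:
  assumes "r < Lb k"
  shows "Gm b (St k + r) = (\<Sum>r'<Lb k. G k r r' * b (St k + r'))"
proof -
  have bk: "blk (St k + r) = k" using assms by (rule blk_St)
  have "Gm b (St k + r) = (\<Sum>j<St k + Lb k. GG (St k + r) j * b j)"
    by (simp add: Gm_def bk St_Suc)
  also have "\<dots> = (\<Sum>j<St k. GG (St k + r) j * b j) + (\<Sum>r'<Lb k. GG (St k + r) (St k + r') * b (St k + r'))"
    by (rule sum_lessThan_add)
  also have "(\<Sum>j<St k. GG (St k + r) j * b j) = 0"
  proof (intro sum.neutral ballI)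
    fix j assume "j \<in> {..<St k}"
    then have "GG (St k + r) j = 0" using GG_nz2[of "St k + r" j] bk by auto
    then show "GG (St k + r) j * b j = 0" by simp
  qed
  also have "(\<Sum>r'<Lb k. GG (St k + r) (St k + r') * b (St k + r')) = (\<Sum>r'<Lb k. G k r r' * b (St k + r'))"
    using assms by (intro sum.cong) (auto simp: GG_def blk_St loc_St)
  finally show ?thesis by simp
qed

lemma Gm_block_contract: "(\<Sum>r<Lb k. \<bar>Gm b (St k + r)\<bar> powr p) \<le> (\<Sum>r<Lb k. \<bar>b (St k + r)\<bar> powr p)"
proof -
  have "(\<Sum>r<Lb k. \<bar>Gm b (St k + r)\<bar> powr p) = (\<Sum>r<Lb k. \<bar>\<Sum>r'<Lb k. G k r r' * b (St k + r')\<bar> powr p)"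
    by (intro sum.cong) (auto simp: Gm_block)
  also have "\<dots> \<le> (\<Sum>r<Lb k. \<bar>b (St k + r)\<bar> powr p)" by (rule Gcon)
  finally show ?thesis .
qed

lemma Gm_contract: "(\<Sum>i<St K. \<bar>Gm b i\<bar> powr p) \<le> (\<Sum>i<St K. \<bar>b i\<bar> powr p)"
  unfolding sum_blocks by (intro sum_mono Gm_block_contract)

definition cT :: real where "cT = 2 powr p * 2"

lemma cT_pos: "cT > 0" by (simp add: cT_def)

lemma Tm_contract: "(\<Sum>i<St K. \<bar>Tm b i\<bar> powr p) \<le> cT * (\<Sum>i<St K. \<bar>b i\<bar> powr p)"
proof -
  have "(\<Sum>i<St K. \<bar>Tm b i\<bar> powr p) \<le> (\<Sum>i<St K. 2 powr p * (\<bar>b i\<bar> powr p + \<bar>Gm b i\<bar> powr p))"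
    unfolding Tm_def by (intro sum_mono abs_add_powr_le p0)
  also have "\<dots> = 2 powr p * ((\<Sum>i<St K. \<bar>b i\<bar> powr p) + (\<Sum>i<St K. \<bar>Gm b i\<bar> powr p))"
    by (simp only: distrib_left sum_distrib_left sum.distrib)
  also have "\<dots> \<le> 2 powr p * ((\<Sum>i<St K. \<bar>b i\<bar> powr p) + (\<Sum>i<St K. \<bar>b i\<bar> powr p))"
    using Gm_contract by (intro mult_left_mono add_left_mono) auto
  finally show ?thesis by (simp add: cT_def)
qed

lemma Gm_Gm: "Gm (Gm b) = (\<lambda>i. 0)"
proof
  fix i
  show "Gm (Gm b) i = 0" unfolding Gm_def
  proof (intro sum.neutral ballI)
    fix j assume "j \<in> {..<St (Suc (blk i))}"
    show "GG i j * (\<Sum>l<St (Suc (blk j)). GG j l * b l) = 0"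
    proof (cases "GG i j = 0")
      case False
      then have bj: "blk j = blk i" and g: "G (blk i) (loc i) (loc j) \<noteq> 0"
        by (auto simp: GG_def split: if_splits)
      have z: "G (blk i) (loc j) l = 0" for l using Gnil[OF g] .
      have "GG j l = 0" for l
        unfolding GG_def bj by (subst z) simp
      then show ?thesis by simp
    qed simp
  qed
qed

lemma Gm_diff: "Gm (\<lambda>i. b i - c i) = (\<lambda>i. Gm b i - Gm c i)"
  by (auto simp: Gm_def sum_subtractf algebra_simps)

lemma Gm_add: "Gm (\<lambda>i. b i + c i) = (\<lambda>i. Gm b i + Gm c i)"
  by (auto simp: Gm_def sum.distrib algebra_simps)

lemma Gm_scale: "Gm (\<lambda>i. b i / c) = (\<lambda>i. Gm b i / c)"
  by (auto simp: Gm_def sum_divide_distrib)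

lemma Gm_zero: "Gm (\<lambda>i. 0) = (\<lambda>i. 0)"
  by (auto simp: Gm_def)

lemma Gm_Tm: "Gm (Tm b) = Gm b"
proof -
  have "Gm (Tm b) = (\<lambda>i. Gm b i + Gm (Gm b) i)" unfolding Tm_def by (rule Gm_add)
  then show ?thesis by (simp add: Gm_Gm)
qed

lemma Tm_inv: "Tm (\<lambda>i. b i - Gm b i) = b"
proof -
  have "Gm (\<lambda>i. b i - Gm b i) = (\<lambda>i. Gm b i - Gm (Gm b) i)" by (rule Gm_diff)
  then show ?thesis by (intro ext) (simp add: Tm_def Gm_Gm)
qed

lemma inv_Tm: "(\<lambda>i. Tm b i - Gm (Tm b) i) = b"
  by (simp add: Gm_Tm Tm_def)

lemma Tm_inv_contract: "(\<Sum>i<St K. \<bar>b i\<bar> powr p) \<le> cT * (\<Sum>i<St K. \<bar>Tm b i\<bar> powr p)"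
proof -
  have bb: "b i = Tm b i + (- Gm (Tm b) i)" for i
    using fun_cong[OF inv_Tm[of b], of i] by simp
  have "(\<Sum>i<St K. \<bar>b i\<bar> powr p) \<le> (\<Sum>i<St K. 2 powr p * (\<bar>Tm b i\<bar> powr p + \<bar>Gm (Tm b) i\<bar> powr p))"
    using abs_add_powr_le[OF p0, of "Tm b _" "- Gm (Tm b) _"] by (intro sum_mono) (metis bb abs_minus_cancel)
  also have "\<dots> = 2 powr p * ((\<Sum>i<St K. \<bar>Tm b i\<bar> powr p) + (\<Sum>i<St K. \<bar>Gm (Tm b) i\<bar> powr p))"
    by (simp only: distrib_left sum_distrib_left sum.distrib)
  also have "\<dots> \<le> 2 powr p * ((\<Sum>i<St K. \<bar>Tm b i\<bar> powr p) + (\<Sum>i<St K. \<bar>Tm b i\<bar> powr p))"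
    using Gm_contract by (intro mult_left_mono add_left_mono) auto
  finally show ?thesis by (simp add: cT_def)
qed

lemma Tm_diff: "Tm (\<lambda>i. b i - c i) = (\<lambda>i. Tm b i - Tm c i)"
  by (intro ext) (simp add: Tm_def Gm_diff)

lemma Tm_scale: "Tm (\<lambda>i. b i / c) = (\<lambda>i. Tm b i / c)"
  by (intro ext) (simp add: Tm_def Gm_scale add_divide_distrib)

lemma Tm_vanish:
  assumes "\<And>j. St K \<le> j \<Longrightarrow> b j = 0" "St K \<le> i"
  shows "Tm b i = 0"
proof -
  have bi: "K \<le> blk i" using assms(2) by (rule blk_ge)
  have "Gm b i = 0" unfolding Gm_def
  proof (intro sum.neutral ballI)
    fix j assume "j \<in> {..<St (Suc (blk i))}"
    show "GG i j * b j = 0"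
    proof (cases "GG i j = 0")
      case False
      then have "St (blk i) \<le> j" using GG_nz2 by blast
      moreover have "St K \<le> St (blk i)" using bi by (rule St_mono)
      ultimately show ?thesis using assms(1) by simp
    qed simp
  qed
  then show ?thesis using assms by (simp add: Tm_def)
qed

lemma lincomb_uu: "lincomb a uu n = Tm (Pr n a)"
proof
  fix i
  define E where "E = St (Suc (blk i))"
  have "lincomb a uu n i = (\<Sum>j<n. a j * (if i = j then 1 else 0)) + (\<Sum>j<n. a j * GG i j)"
    by (simp add: lincomb_def uu_def distrib_left sum.distrib)
  also have "(\<Sum>j<n. a j * (if i = j then 1 else 0)) = Pr n a i"
    by (simp add: Pr_def if_distrib cong: if_cong)
  also have "(\<Sum>j<n. a j * GG i j) = (\<Sum>j<max n E. GG i j * Pr n a j)"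
    by (rule sym, rule trans[OF sum_zero_tail[of n]]) (auto simp: Pr_def mult.commute)
  also have "\<dots> = (\<Sum>j<E. GG i j * Pr n a j)"
  proof (rule sum_zero_tail)
    fix j assume "E \<le> j" "j < max n E"
    then have "GG i j = 0" using GG_nz2[of i j] by (auto simp: E_def)
    then show "GG i j * Pr n a j = 0" by simp
  qed simp
  finally show "lincomb a uu n i = Tm (Pr n a) i" by (simp add: Tm_def Gm_def E_def)
qed

lemma lincomb_canon: "lincomb a canon_basis n = Pr n a"
  by (auto simp: lincomb_def canon_basis_def Pr_def if_distrib cong: if_cong)

lemma Pr_vanish: "St (Suc (blk n)) \<le> j \<Longrightarrow> Pr n a j = 0"
  using blk_props(2)[of n] by (simp add: Pr_def)

lemma equiv: "equivalent_seq p uu canon_basis"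
  unfolding equivalent_seq_def
proof (intro exI[of _ "cT powr (1/p)"] conjI allI)
  show "cT powr (1/p) > 0" using cT_pos by simp
  fix a m
  define K where "K = Suc (blk m)"
  define b where "b = Pr m a"
  have bv: "\<And>j. St K \<le> j \<Longrightarrow> b j = 0" unfolding b_def K_def by (rule Pr_vanish)
  have tv: "\<And>j. St K \<le> j \<Longrightarrow> Tm b j = 0" using bv by (rule Tm_vanish)
  have nb: "lp_norm p b = (\<Sum>i<St K. \<bar>b i\<bar> powr p) powr (1/p)" by (rule lp_norm_finite) (rule bv)
  have nt: "lp_norm p (Tm b) = (\<Sum>i<St K. \<bar>Tm b i\<bar> powr p) powr (1/p)" by (rule lp_norm_finite) (rule tv)
  have s0: "(\<Sum>i<St K. \<bar>b i\<bar> powr p) \<ge> 0" "(\<Sum>i<St K. \<bar>Tm b i\<bar> powr p) \<ge> 0"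
    by (auto intro!: sum_nonneg)
  have "lp_norm p (Tm b) \<le> (cT * (\<Sum>i<St K. \<bar>b i\<bar> powr p)) powr (1/p)"
    unfolding nt using Tm_contract p0 s0 by (intro powr_mono2) auto
  also have "\<dots> = cT powr (1/p) * lp_norm p b" unfolding nb using cT_pos s0 by (simp add: powr_mult)
  finally show "lp_norm p (lincomb a uu m) \<le> cT powr (1/p) * lp_norm p (lincomb a canon_basis m)"
    by (simp add: lincomb_uu lincomb_canon b_def)
  have "lp_norm p b \<le> (cT * (\<Sum>i<St K. \<bar>Tm b i\<bar> powr p)) powr (1/p)"
    unfolding nb using Tm_inv_contract p0 s0 by (intro powr_mono2) auto
  also have "\<dots> = cT powr (1/p) * lp_norm p (Tm b)" unfolding nt using cT_pos s0 by (simp add: powr_mult)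
  finally show "lp_norm p (lincomb a canon_basis m) \<le> cT powr (1/p) * lp_norm p (lincomb a uu m)"
    by (simp add: lincomb_uu lincomb_canon b_def)
qed

end



context blocksys
begin

lemma uu_vanish: "St (Suc (blk k)) \<le> i \<Longrightarrow> uu k i = 0"
proof -
  assume a: "St (Suc (blk k)) \<le> i"
  have "i \<noteq> k" using a blk_props(2)[of k] by auto
  moreover have "GG i k = 0"
  proof (rule ccontr)
    assume "GG i k \<noteq> 0"
    then have "blk k = blk i" by (rule GG_nz)
    then show False using a blk_props(2)[of i] by simp
  qed
  ultimately show ?thesis by (simp add: uu_def)
qed

lemma uu_lp: "uu k \<in> lp p"
  by (rule lp_finite[of "St (Suc (blk k))"]) (rule uu_vanish)

lemma summable_bound_blocks:
  fixes f g :: "nat \<Rightarrow> real"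
  assumes f0: "\<And>i. f i \<ge> 0" and g0: "\<And>i. g i \<ge> 0" and sg: "summable g" and c0: "c \<ge> 0"
    and le: "\<And>K. (\<Sum>i<St K. f i) \<le> c * (\<Sum>i<St K. g i)"
  shows "summable f" "suminf f \<le> c * suminf g"
proof -
  have b: "(\<Sum>i<n. f i) \<le> c * suminf g" for n
  proof -
    have "(\<Sum>i<n. f i) \<le> (\<Sum>i<St n. f i)"
      using St_ge[of n] f0 by (intro sum_mono2) auto
    also have "\<dots> \<le> c * (\<Sum>i<St n. g i)" by (rule le)
    also have "\<dots> \<le> c * suminf g"
      using sg g0 c0 by (intro mult_left_mono sum_le_suminf) auto
    finally show ?thesis .
  qed
  show sf: "summable f" by (rule summableI_nonneg_bounded[OF f0 b])
  show "suminf f \<le> c * suminf g" by (rule suminf_le_const[OF sf b])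
qed

lemma Gm_lp:
  assumes "summable (\<lambda>i. \<bar>b i\<bar> powr p)"
  shows "summable (\<lambda>i. \<bar>Gm b i\<bar> powr p)"
  using summable_bound_blocks(1)[of "\<lambda>i. \<bar>Gm b i\<bar> powr p" "\<lambda>i. \<bar>b i\<bar> powr p" 1] assms Gm_contract
  by auto

lemma Tm_lp:
  assumes "summable (\<lambda>i. \<bar>b i\<bar> powr p)"
  shows "summable (\<lambda>i. \<bar>Tm b i\<bar> powr p)"
    "(\<Sum>i. \<bar>Tm b i\<bar> powr p) \<le> cT * (\<Sum>i. \<bar>b i\<bar> powr p)"
  using summable_bound_blocks[of "\<lambda>i. \<bar>Tm b i\<bar> powr p" "\<lambda>i. \<bar>b i\<bar> powr p" cT] assms Tm_contract cT_pos
  by auto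

lemma summable_diff_powr:
  assumes "summable (\<lambda>i. \<bar>f i\<bar> powr p)" "summable (\<lambda>i. \<bar>g i\<bar> powr p)"
  shows "summable (\<lambda>i. \<bar>f i - g i\<bar> powr p)"
proof (rule summable_comparison_test'[of "\<lambda>i. 2 powr p * (\<bar>f i\<bar> powr p + \<bar>g i\<bar> powr p)" 0])
  show "summable (\<lambda>i. 2 powr p * (\<bar>f i\<bar> powr p + \<bar>g i\<bar> powr p))"
    using assms by (intro summable_mult summable_add)
  fix n :: nat
  have "\<bar>f n - g n\<bar> powr p \<le> 2 powr p * (\<bar>f n\<bar> powr p + \<bar>- g n\<bar> powr p)"
    using abs_add_powr_le[OF p0, of "f n" "- g n"] by simp
  then show "norm (\<bar>f n - g n\<bar> powr p) \<le> 2 powr p * (\<bar>f n\<bar> powr p + \<bar>g n\<bar> powr p)" by simp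
qed

lemma expansion_exists:
  assumes x: "x \<in> lp p"
  shows "has_expansion p uu x (\<lambda>i. x i - Gm x i)"
proof -
  define a where "a i = x i - Gm x i" for i
  have sx: "summable (\<lambda>i. \<bar>x i\<bar> powr p)" using x by (simp add: lp_def)
  have sa: "summable (\<lambda>i. \<bar>a i\<bar> powr p)"
    unfolding a_def by (rule summable_diff_powr[OF sx Gm_lp[OF sx]])
  define Q where "Q n j = (if j < n then 0 else a j)" for n j
  have xa: "Tm a = x" unfolding a_def by (rule Tm_inv)
  have eqQ: "(\<lambda>i. x i - lincomb a uu n i) = Tm (Q n)" for n
  proof -
    have "(\<lambda>i. x i - lincomb a uu n i) = (\<lambda>i. Tm a i - Tm (Pr n a) i)"
      by (simp add: xa lincomb_uu)
    also have "\<dots> = Tm (\<lambda>i. a i - Pr n a i)" by (simp add: Tm_diff)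
    also have "(\<lambda>i. a i - Pr n a i) = Q n" by (auto simp: Q_def Pr_def)
    finally show ?thesis .
  qed
  define tl where "tl n = (\<Sum>i. \<bar>a i\<bar> powr p) - (\<Sum>i<n. \<bar>a i\<bar> powr p)" for n
  have sQ: "summable (\<lambda>i. \<bar>Q n i\<bar> powr p)" for n
    by (rule summable_comparison_test'[OF sa, of 0]) (auto simp: Q_def)
  have sQ_eq: "(\<Sum>i. \<bar>Q n i\<bar> powr p) = tl n" for n
  proof -
    have "(\<Sum>i. \<bar>Q n i\<bar> powr p) = (\<Sum>i. \<bar>Q n (i + n)\<bar> powr p) + (\<Sum>i<n. \<bar>Q n i\<bar> powr p)"
      by (rule suminf_split_initial_segment[OF sQ])
    also have "(\<Sum>i<n. \<bar>Q n i\<bar> powr p) = 0" by (simp add: Q_def)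
    also have "(\<Sum>i. \<bar>Q n (i + n)\<bar> powr p) = (\<Sum>i. \<bar>a (i + n)\<bar> powr p)" by (simp add: Q_def)
    also have "\<dots> = tl n" unfolding tl_def by (rule suminf_minus_initial_segment[OF sa])
    finally show ?thesis by simp
  qed
  have tl0: "tl \<longlonglongrightarrow> 0"
  proof -
    have "(\<lambda>n. (\<Sum>i. \<bar>a i\<bar> powr p) - (\<Sum>i<n. \<bar>a i\<bar> powr p)) \<longlonglongrightarrow> (\<Sum>i. \<bar>a i\<bar> powr p) - (\<Sum>i. \<bar>a i\<bar> powr p)"
      by (intro tendsto_diff tendsto_const summable_LIMSEQ[OF sa])
    then show ?thesis by (simp add: tl_def[abs_def])
  qed
  have tlnn: "tl n \<ge> 0" for n using sQ_eq[of n] sQ[of n] by (metis suminf_nonneg powr_ge_zero)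
  have bound: "lp_norm p (Tm (Q n)) \<le> (cT * tl n) powr (1/p)" for n
    unfolding lp_norm_def using Tm_lp(2)[OF sQ[of n]] sQ_eq[of n] p0
    by (intro powr_mono2) (auto intro!: suminf_nonneg summable_bound_blocks Tm_lp(1)[OF sQ[of n]])
  have lim: "(\<lambda>n. (cT * tl n) powr (1/p)) \<longlonglongrightarrow> 0"
  proof (rule tendsto_zero_powrI[where b="1/p"])
    show "(\<lambda>n. cT * tl n) \<longlonglongrightarrow> 0" using tendsto_mult_right_zero[OF tl0] by simp
  qed (use p0 tlnn cT_pos in auto)
  have "(\<lambda>n. lp_norm p (Tm (Q n))) \<longlonglongrightarrow> 0"
    by (rule real_tendsto_sandwich[OF _ _ tendsto_const lim])
       (use bound in \<open>auto simp: lp_norm_def\<close>)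
  then show ?thesis unfolding has_expansion_def by (simp add: eqQ a_def[symmetric])
qed

lemma coord_le_norm:
  assumes "summable (\<lambda>j. \<bar>d j\<bar> powr p)"
  shows "\<bar>d i\<bar> \<le> lp_norm p d"
proof -
  have "(\<Sum>j\<in>{i}. \<bar>d j\<bar> powr p) \<le> (\<Sum>j. \<bar>d j\<bar> powr p)"
    by (rule sum_le_suminf[OF assms]) auto
  then have "\<bar>d i\<bar> powr p \<le> (\<Sum>j. \<bar>d j\<bar> powr p)" by simp
  then have "(\<bar>d i\<bar> powr p) powr (1/p) \<le> (\<Sum>j. \<bar>d j\<bar> powr p) powr (1/p)"
    using p0 by (intro powr_mono2) auto
  then show ?thesis using p0 by (simp add: powr_powr lp_norm_def)
qed

lemma expansion_unique:
  assumes x: "x \<in> lp p" and h: "has_expansion p uu x a'"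
  shows "a' = (\<lambda>i. x i - Gm x i)"
proof -
  have sx: "summable (\<lambda>i. \<bar>x i\<bar> powr p)" using x by (simp add: lp_def)
  have xt: "x i = Tm a' i" for i
  proof -
    define E where "E = St (Suc (blk i))"
    have stab: "lincomb a' uu n i = Tm a' i" if "E \<le> n" for n
    proof -
      have iE: "i < E" using blk_props(2)[of i] by (simp add: E_def)
      have "lincomb a' uu n i = Pr n a' i + (\<Sum>j<E. GG i j * Pr n a' j)"
        by (simp add: lincomb_uu Tm_def Gm_def E_def)
      also have "\<dots> = a' i + (\<Sum>j<E. GG i j * a' j)"
        using that iE by (auto simp: Pr_def intro!: sum.cong)
      finally show ?thesis by (simp add: Tm_def Gm_def E_def)
    qed
    define d where "d n = (\<lambda>j. x j - lincomb a' uu n j)" for n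
    have sd: "summable (\<lambda>j. \<bar>d n j\<bar> powr p)" for n
    proof -
      have "summable (\<lambda>j. \<bar>lincomb a' uu n j\<bar> powr p)"
        using lp_finite[of "St (Suc (blk n))" "lincomb a' uu n" p]
          Tm_vanish[of "Suc (blk n)" "Pr n a'"] Pr_vanish[of n _ a']
        by (auto simp: lp_def lincomb_uu)
      then show ?thesis unfolding d_def by (rule summable_diff_powr[OF sx])
    qed
    have "\<bar>x i - Tm a' i\<bar> \<le> 0"
    proof (rule LIMSEQ_le_const)
      show "(\<lambda>n. lp_norm p (d n)) \<longlonglongrightarrow> 0" using h by (simp add: has_expansion_def d_def)
      show "\<exists>N. \<forall>n\<ge>N. \<bar>x i - Tm a' i\<bar> \<le> lp_norm p (d n)"
      proof (intro exI allI impI)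
        fix n assume "E \<le> n"
        then have "d n i = x i - Tm a' i" by (simp add: d_def stab)
        then show "\<bar>x i - Tm a' i\<bar> \<le> lp_norm p (d n)" using coord_le_norm[OF sd[of n], of i] by simp
      qed
    qed
    then show ?thesis by simp
  qed
  then have "x = Tm a'" by auto
  then show ?thesis using inv_Tm[of a'] by simp
qed

lemma schauder: "schauder_basis p uu"
  unfolding schauder_basis_def
proof (intro conjI allI ballI)
  show "uu k \<in> lp p" for k by (rule uu_lp)
  fix x assume x: "x \<in> lp p"
  show "\<exists>!a. has_expansion p uu x a"
    using expansion_exists[OF x] expansion_unique[OF x] by blast
qed

end



lemma greedy_set_flat:
  fixes c :: "nat \<Rightarrow> real"
  assumes fin: "finite Sg" and v: "v > 0" and c: "\<And>j. c j = (if j \<in> Sg then v else 0)"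
    and n: "n \<le> card Sg"
  shows "greedy_set c n = {j \<in> Sg. card (Sg \<inter> {..<j}) < n}"
proof (intro set_eqI iffI)
  fix j assume j: "j \<in> greedy_set c n"
  then have f: "finite {i. greedy_prec c i j}" and cd: "card {i. greedy_prec c i j} < n"
    by (auto simp: greedy_set_def)
  show "j \<in> {j \<in> Sg. card (Sg \<inter> {..<j}) < n}"
  proof (cases "j \<in> Sg")
    case True
    have "{i. greedy_prec c i j} = Sg \<inter> {..<j}"
      using True v by (auto simp: greedy_prec_def c split: if_splits)
    then show ?thesis using True cd by simp
  next
    case False
    have "Sg \<subseteq> {i. greedy_prec c i j}"
      using False v by (auto simp: greedy_prec_def c)
    then have "card Sg \<le> card {i. greedy_prec c i j}" using f by (rule card_mono[rotated])
    then show ?thesis using cd n by simp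
  qed
next
  fix j assume j: "j \<in> {j \<in> Sg. card (Sg \<inter> {..<j}) < n}"
  have "{i. greedy_prec c i j} = Sg \<inter> {..<j}"
    using j v by (auto simp: greedy_prec_def c split: if_splits)
  then show "j \<in> greedy_set c n" using j fin by (simp add: greedy_set_def)
qed

lemma prefix_card:
  fixes Sg :: "nat set"
  assumes fin: "finite Sg"
  shows "{j \<in> Sg. card (Sg \<inter> {..<j}) < card (Sg \<inter> {..<t})} = Sg \<inter> {..<t}"
proof (intro set_eqI iffI)
  fix j assume j: "j \<in> {j \<in> Sg. card (Sg \<inter> {..<j}) < card (Sg \<inter> {..<t})}"
  show "j \<in> Sg \<inter> {..<t}"
  proof (rule ccontr)
    assume "j \<notin> Sg \<inter> {..<t}"
    then have "t \<le> j" using j by auto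
    then have "Sg \<inter> {..<t} \<subseteq> Sg \<inter> {..<j}" by auto
    then have "card (Sg \<inter> {..<t}) \<le> card (Sg \<inter> {..<j})" using fin by (intro card_mono) auto
    then show False using j by simp
  qed
next
  fix j assume j: "j \<in> Sg \<inter> {..<t}"
  then have "Sg \<inter> {..<j} \<subset> Sg \<inter> {..<t}" by auto
  then have "card (Sg \<inter> {..<j}) < card (Sg \<inter> {..<t})" using fin by (intro psubset_card_mono) auto
  then show "j \<in> {j \<in> Sg. card (Sg \<inter> {..<j}) < card (Sg \<inter> {..<t})}" using j by auto
qed

context blocksys
begin

definition Tl :: "nat \<Rightarrow> (nat \<Rightarrow> real) \<Rightarrow> nat \<Rightarrow> real" where
  "Tl k \<beta> r = \<beta> r + (\<Sum>r'<Lb k. G k r r' * \<beta> r')"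

definition Pl :: "nat \<Rightarrow> (nat \<Rightarrow> real) \<Rightarrow> nat \<Rightarrow> real" where
  "Pl t \<beta> r = (if r < t then \<beta> r else 0)"

definition ga :: "nat \<Rightarrow> (nat \<Rightarrow> real) \<Rightarrow> nat \<Rightarrow> real" where
  "ga k \<beta> j = (if St k \<le> j \<and> j < St (Suc k) then \<beta> (j - St k) else 0)"

lemma Tm_ga_in: "r < Lb k \<Longrightarrow> Tm (ga k \<beta>) (St k + r) = Tl k \<beta> r"
  by (simp add: Tm_def Gm_block Tl_def ga_def St_Suc)

lemma Tm_ga_out:
  assumes "\<not> (St k \<le> i \<and> i < St (Suc k))"
  shows "Tm (ga k \<beta>) i = 0"
proof -
  have "Gm (ga k \<beta>) i = 0" unfolding Gm_def
  proof (intro sum.neutral ballI)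
    fix j assume "j \<in> {..<St (Suc (blk i))}"
    show "GG i j * ga k \<beta> j = 0"
    proof (cases "GG i j = 0 \<or> ga k \<beta> j = 0")
      case False
      then have "blk j = blk i" using GG_nz by blast
      moreover have "St k \<le> j \<and> j < St (Suc k)" using False by (auto simp: ga_def split: if_splits)
      then have "blk j = k" using blk_eq by blast
      ultimately have "blk i = k" by simp
      then show ?thesis using assms blk_props[of i] by simp
    qed auto
  qed
  moreover have "ga k \<beta> i = 0" using assms unfolding ga_def by meson
  ultimately show ?thesis by (simp add: Tm_def)
qed

lemma Pr_ga: "t \<le> St (Suc k) \<Longrightarrow> Pr t (ga k \<beta>) = ga k (Pl (t - St k) \<beta>)"
  by (intro ext) (auto simp: Pr_def ga_def Pl_def)

lemma block_norm_lower:
  assumes "\<And>i. St (Suc k) \<le> i \<Longrightarrow> f i = 0"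
  shows "lp_norm p f \<ge> (\<Sum>r<Lb k. \<bar>f (St k + r)\<bar> powr p) powr (1/p)"
proof -
  have "lp_norm p f = (\<Sum>i<St k + Lb k. \<bar>f i\<bar> powr p) powr (1/p)"
    using lp_norm_finite[of "St (Suc k)" f p] assms by (simp add: St_Suc)
  also have "(\<Sum>i<St k + Lb k. \<bar>f i\<bar> powr p) = (\<Sum>i<St k. \<bar>f i\<bar> powr p) + (\<Sum>r<Lb k. \<bar>f (St k + r)\<bar> powr p)"
    by (rule sum_lessThan_add)
  finally show ?thesis using p0
    by (simp, intro powr_mono2) (auto intro!: sum_nonneg)
qed

lemma block_norm_eq:
  assumes "\<And>i. \<not> (St k \<le> i \<and> i < St (Suc k)) \<Longrightarrow> f i = 0"
  shows "lp_norm p f = (\<Sum>r<Lb k. \<bar>f (St k + r)\<bar> powr p) powr (1/p)"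
proof -
  have "lp_norm p f = (\<Sum>i<St k + Lb k. \<bar>f i\<bar> powr p) powr (1/p)"
    using lp_norm_finite[of "St (Suc k)" f p] assms by (simp add: St_Suc)
  also have "(\<Sum>i<St k + Lb k. \<bar>f i\<bar> powr p) = (\<Sum>i<St k. \<bar>f i\<bar> powr p) + (\<Sum>r<Lb k. \<bar>f (St k + r)\<bar> powr p)"
    by (rule sum_lessThan_add)
  also have "(\<Sum>i<St k. \<bar>f i\<bar> powr p) = 0" using assms by (intro sum.neutral) auto
  finally show ?thesis by simp
qed

lemma Max_ge_abs:
  fixes h :: "nat \<Rightarrow> real"
  assumes "finite A" "n \<in> A"
  shows "\<bar>h n\<bar> \<le> Max ((\<lambda>n. \<bar>h n\<bar>) ` A)"
  using assms by (intro Max_ge) auto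

lemma Max_nonneg_abs:
  fixes h :: "nat \<Rightarrow> real"
  assumes "finite A" "A \<noteq> {}"
  shows "0 \<le> Max ((\<lambda>n. \<bar>h n\<bar>) ` A)"
proof -
  obtain n where "n \<in> A" using assms by auto
  then show ?thesis using Max_ge_abs[OF assms(1), of n h] by linarith
qed

lemma Max_zero_abs:
  fixes h :: "nat \<Rightarrow> real"
  assumes "A \<noteq> {}" "\<And>n. n \<in> A \<Longrightarrow> h n = 0"
  shows "Max ((\<lambda>n. \<bar>h n\<bar>) ` A) = 0"
proof -
  have "(\<lambda>n. \<bar>h n\<bar>) ` A = {0}" using assms by auto
  then show ?thesis by simp
qed

lemma bad_block:
  assumes Sp: "Sp \<subseteq> {..<Lb k}" and al: "\<alpha> = (\<lambda>r. if r \<in> Sp then 1 else 0)"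
    and th: "\<And>r. r < Lb k \<Longrightarrow> \<theta> r \<le> Lb k"
    and pos: "(\<Sum>r<Lb k. \<bar>Tl k \<alpha> r\<bar> powr p) > 0"
    and F: "(\<Sum>r<Lb k. \<bar>Tl k (Pl (\<theta> r) \<alpha>) r\<bar> powr p) \<ge> F * (\<Sum>r<Lb k. \<bar>Tl k \<alpha> r\<bar> powr p)"
    and F0: "F \<ge> 0"
  shows "\<exists>m a. lp_norm p (\<lambda>i. Max ((\<lambda>n. \<bar>lincomb a uu (Suc n) i\<bar>) ` {..m}))
                 \<ge> F powr (1/p) * lp_norm p (lincomb a uu (Suc m)) \<and> lp_norm p (lincomb a uu (Suc m)) > 0"
    and "\<exists>m\<ge>1. \<exists>x. x \<in> lp p \<and> (\<exists>a. has_expansion p uu x a) \<and> lp_norm p x = 1 \<and>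
            lp_norm p (\<lambda>i. Max ((\<lambda>n. \<bar>greedy_sum p uu n x i\<bar>) ` {1..m})) \<ge> F powr (1/p)"
proof -
  define a where "a = ga k \<alpha>"
  define S where "S = (\<Sum>r<Lb k. \<bar>Tl k \<alpha> r\<bar> powr p)"
  define lam where "lam = lp_norm p (Tm a)"
  have lam_eq: "lam = S powr (1/p)"
    unfolding lam_def S_def
    by (subst block_norm_eq[of k]) (auto simp: a_def Tm_ga_out Tm_ga_in)
  have lam_pos: "lam > 0" using pos by (simp add: lam_eq S_def)
  have low: "(\<Sum>r<Lb k. \<bar>Tl k (Pl (\<theta> r) \<alpha>) r\<bar> powr p) powr (1/p) \<ge> F powr (1/p) * lam"
  proof -
    have "(F * S) powr (1/p) \<le> (\<Sum>r<Lb k. \<bar>Tl k (Pl (\<theta> r) \<alpha>) r\<bar> powr p) powr (1/p)"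
      using F F0 pos p0 by (intro powr_mono2) (auto simp: S_def)
    then show ?thesis using F0 pos by (simp add: lam_eq powr_mult S_def)
  qed
  have Tl0: "Tl k (Pl 0 \<alpha>) r = 0" for r by (simp add: Tl_def Pl_def)
  have Pl_full: "Pl (St (Suc k) - St k) \<alpha> = \<alpha>" using Sp by (intro ext) (auto simp: Pl_def St_Suc al)
  have SSk: "St (Suc k) \<ge> 1" using Lb_pos[of k] by (simp add: St_Suc)
  have lc: "lincomb a uu t = Tm (ga k (Pl (t - St k) \<alpha>))" if "t \<le> St (Suc k)" for t
    using that by (simp add: lincomb_uu a_def Pr_ga)
  have val: "lincomb a uu (St k + \<theta> r) (St k + r) = Tl k (Pl (\<theta> r) \<alpha>) r" if "r < Lb k" for r
    using that th[OF that] by (simp add: lc St_Suc Tm_ga_in)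
  show "\<exists>m a. lp_norm p (\<lambda>i. Max ((\<lambda>n. \<bar>lincomb a uu (Suc n) i\<bar>) ` {..m}))
                 \<ge> F powr (1/p) * lp_norm p (lincomb a uu (Suc m)) \<and> lp_norm p (lincomb a uu (Suc m)) > 0"
  proof (intro exI conjI)
    define m where "m = St (Suc k) - 1"
    have Sm: "Suc m = St (Suc k)" using SSk by (simp add: m_def)
    have lm: "lincomb a uu (Suc m) = Tm a" using lc[of "Suc m"] by (simp add: Sm Pl_full a_def)
    define MF where "MF i = Max ((\<lambda>n. \<bar>lincomb a uu (Suc n) i\<bar>) ` {..m})" for i
    have MFv: "MF i = 0" if "St (Suc k) \<le> i" for i
      unfolding MF_def
    proof (rule Max_zero_abs)
      fix n assume "n \<in> {..m}"
      then have "Suc n \<le> St (Suc k)" using Sm by simp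
      then show "lincomb a uu (Suc n) i = 0" using that by (simp add: lc Tm_ga_out)
    qed simp
    have MFl: "\<bar>Tl k (Pl (\<theta> r) \<alpha>) r\<bar> \<le> MF (St k + r)" if "r < Lb k" for r
    proof (cases "St k + \<theta> r = 0")
      case True
      then have "\<theta> r = 0" by simp
      then show ?thesis using Max_nonneg_abs[of "{..m}" "\<lambda>n. lincomb a uu (Suc n) (St k + r)"]
        by (simp add: Tl0 MF_def)
    next
      case False
      then obtain n where n: "St k + \<theta> r = Suc n" by (metis not0_implies_Suc)
      have "n \<le> m" using n th[OF that] Sm by (simp add: St_Suc)
      then have "\<bar>lincomb a uu (Suc n) (St k + r)\<bar> \<le> MF (St k + r)"
        unfolding MF_def by (intro Max_ge_abs) auto
      then show ?thesis using val[OF that] n by simp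
    qed
    have "lp_norm p MF \<ge> (\<Sum>r<Lb k. \<bar>MF (St k + r)\<bar> powr p) powr (1/p)"
      by (rule block_norm_lower) (rule MFv)
    moreover have "(\<Sum>r<Lb k. \<bar>MF (St k + r)\<bar> powr p) \<ge> (\<Sum>r<Lb k. \<bar>Tl k (Pl (\<theta> r) \<alpha>) r\<bar> powr p)"
      using MFl p0 by (intro sum_mono powr_mono2) (auto intro: order_trans[OF _ abs_ge_self])
    then have "(\<Sum>r<Lb k. \<bar>MF (St k + r)\<bar> powr p) powr (1/p) \<ge> (\<Sum>r<Lb k. \<bar>Tl k (Pl (\<theta> r) \<alpha>) r\<bar> powr p) powr (1/p)"
      using p0 by (intro powr_mono2) (auto intro!: sum_nonneg)
    ultimately have "lp_norm p MF \<ge> (\<Sum>r<Lb k. \<bar>Tl k (Pl (\<theta> r) \<alpha>) r\<bar> powr p) powr (1/p)"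
      by (rule order_trans[rotated])
    then show "lp_norm p (\<lambda>i. Max ((\<lambda>n. \<bar>lincomb a uu (Suc n) i\<bar>) ` {..m}))
                 \<ge> F powr (1/p) * lp_norm p (lincomb a uu (Suc m))"
      using low by (simp add: MF_def[abs_def] lm lam_def)
    show "lp_norm p (lincomb a uu (Suc m)) > 0" using lam_pos by (simp add: lm lam_def)
  qed
  define Sg where "Sg = (\<lambda>r. St k + r) ` Sp"
  have finSp: "finite Sp" using Sp finite_subset by blast
  have finSg: "finite Sg" using finSp by (simp add: Sg_def)
  have a_ind: "a j = (if j \<in> Sg then 1 else 0)" for j
  proof (cases "St k \<le> j \<and> j < St (Suc k)")
    case True
    then have "j \<in> Sg \<longleftrightarrow> j - St k \<in> Sp" by (force simp: Sg_def)
    then show ?thesis using True by (simp add: a_def ga_def al)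
  next
    case False
    then have "j \<notin> Sg" using Sp by (auto simp: Sg_def St_Suc)
    moreover have "ga k \<alpha> j = 0" using False unfolding ga_def by meson
    ultimately show ?thesis by (simp add: a_def)
  qed
  have Sp_ne: "Sp \<noteq> {}"
  proof
    assume "Sp = {}"
    then have "\<alpha> = (\<lambda>r. 0)" by (simp add: al)
    then show False using pos by (simp add: Tl_def)
  qed
  have cardSg: "card Sg \<ge> 1" using Sp_ne finSg by (simp add: Sg_def card_gt_0_iff Suc_le_eq)
  define x where "x i = Tm a i / lam" for i
  define b where "b i = a i / lam" for i
  have "Tm b = (\<lambda>i. Tm a i / lam)" unfolding b_def[abs_def] by (rule Tm_scale)
  then have xTb: "x = Tm b" by (simp add: x_def[abs_def])
  have x_out: "x i = 0" if "\<not> (St k \<le> i \<and> i < St (Suc k))" for i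
    using that by (simp add: x_def a_def Tm_ga_out)
  have xlp: "x \<in> lp p" by (rule lp_finite[of "St (Suc k)"]) (simp add: x_out)
  have hb: "has_expansion p uu x b"
    using expansion_exists[OF xlp] inv_Tm[of b] by (simp add: xTb)
  have coef: "coef p uu x = b"
    unfolding coef_def using expansion_unique[OF xlp] hb by (intro the_equality) auto
  have nx: "lp_norm p x = 1"
  proof -
    have "lp_norm p x = (\<Sum>r<Lb k. \<bar>x (St k + r)\<bar> powr p) powr (1/p)"
      by (rule block_norm_eq) (rule x_out)
    also have "(\<Sum>r<Lb k. \<bar>x (St k + r)\<bar> powr p) = S / lam powr p"
      using lam_pos by (simp add: x_def a_def Tm_ga_in S_def abs_divide powr_divide sum_divide_distrib)
    also have "(S / lam powr p) powr (1/p) = S powr (1/p) / lam"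
      using lam_pos pos p0 by (simp add: powr_divide powr_powr S_def)
    also have "\<dots> = 1" using lam_pos by (simp add: lam_eq)
    finally show ?thesis .
  qed
  have cb: "b j = (if j \<in> Sg then 1 / lam else 0)" for j by (simp add: b_def a_ind)
  define m where "m = card Sg"
  have gs: "greedy_sum p uu (card (Sg \<inter> {..<t})) x i = lincomb a uu t i / lam" for t i
  proof -
    have le: "card (Sg \<inter> {..<t}) \<le> card Sg" using finSg by (intro card_mono) auto
    have "greedy_set (coef p uu x) (card (Sg \<inter> {..<t})) = Sg \<inter> {..<t}"
      unfolding coef using greedy_set_flat[OF finSg _ cb le] lam_pos prefix_card[OF finSg] by simp
    then have "greedy_sum p uu (card (Sg \<inter> {..<t})) x i = (\<Sum>j\<in>Sg \<inter> {..<t}. b j * uu j i)"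
      by (simp add: greedy_sum_def coef)
    also have "\<dots> = (\<Sum>j\<in>Sg \<inter> {..<t}. uu j i) / lam"
      by (simp add: cb sum_divide_distrib)
    also have "(\<Sum>j\<in>Sg \<inter> {..<t}. uu j i) = lincomb a uu t i"
    proof -
      have "lincomb a uu t i = (\<Sum>j<t. if j \<in> Sg then uu j i else 0)"
        unfolding lincomb_def by (intro sum.cong) (auto simp: a_ind)
      also have "\<dots> = sum (\<lambda>j. uu j i) ({..<t} \<inter> Sg)" by (rule sum.inter_restrict[symmetric]) simp
      finally show ?thesis by (simp add: Int_commute)
    qed
    finally show ?thesis .
  qed
  have gs_out: "greedy_sum p uu n x i = 0" if "n \<in> {1..m}" "\<not> (St k \<le> i \<and> i < St (Suc k))" for n i
  proof -
    have "greedy_set (coef p uu x) n \<subseteq> Sg"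
      unfolding coef using greedy_set_flat[OF finSg _ cb] lam_pos that(1) by (simp add: m_def)
    moreover have "uu j i = 0" if "j \<in> Sg" for j
    proof -
      from that obtain r where r: "r \<in> Sp" "j = St k + r" by (auto simp: Sg_def)
      then have rl: "r < Lb k" using Sp by auto
      have "i \<noteq> j" using r rl \<open>\<not> (St k \<le> i \<and> i < St (Suc k))\<close> by (auto simp: St_Suc)
      moreover have "GG i j = 0"
      proof (rule ccontr)
        assume "GG i j \<noteq> 0"
        then have "blk j = blk i" by (rule GG_nz)
        moreover have "blk j = k" using r rl by (simp add: blk_St)
        ultimately show False using \<open>\<not> (St k \<le> i \<and> i < St (Suc k))\<close> blk_props[of i] by simp
      qed
      ultimately show ?thesis by (simp add: uu_def)
    qed
    ultimately show ?thesis unfolding greedy_sum_def by (intro sum.neutral) auto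
  qed
  show "\<exists>m\<ge>1. \<exists>x. x \<in> lp p \<and> (\<exists>a. has_expansion p uu x a) \<and> lp_norm p x = 1 \<and>
            lp_norm p (\<lambda>i. Max ((\<lambda>n. \<bar>greedy_sum p uu n x i\<bar>) ` {1..m})) \<ge> F powr (1/p)"
  proof (rule exI[of _ m], intro conjI)
    show "1 \<le> m" using cardSg by (simp add: m_def)
    show "\<exists>x. x \<in> lp p \<and> (\<exists>a. has_expansion p uu x a) \<and> lp_norm p x = 1 \<and>
            lp_norm p (\<lambda>i. Max ((\<lambda>n. \<bar>greedy_sum p uu n x i\<bar>) ` {1..m})) \<ge> F powr (1/p)"
  proof (rule exI[of _ x], intro conjI)
    show "x \<in> lp p" by (rule xlp)
    show "\<exists>a. has_expansion p uu x a" using hb by blast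
    show "lp_norm p x = 1" by (rule nx)
    define MG where "MG i = Max ((\<lambda>n. \<bar>greedy_sum p uu n x i\<bar>) ` {1..m})" for i
    have MGv: "MG i = 0" if "St (Suc k) \<le> i" for i
      unfolding MG_def using cardSg that by (intro Max_zero_abs gs_out) (auto simp: m_def)
    have MGl: "\<bar>Tl k (Pl (\<theta> r) \<alpha>) r\<bar> / lam \<le> MG (St k + r)" if "r < Lb k" for r
    proof -
      define t where "t = St k + \<theta> r"
      have v: "greedy_sum p uu (card (Sg \<inter> {..<t})) x (St k + r) = Tl k (Pl (\<theta> r) \<alpha>) r / lam"
        using gs val[OF that] by (simp add: t_def)
      show ?thesis
      proof (cases "card (Sg \<inter> {..<t}) = 0")
        case True
        then have "Sg \<inter> {..<t} = {}" using finSg by simp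
        then have "lincomb a uu t (St k + r) = 0"
          by (auto simp: lincomb_def a_ind intro!: sum.neutral)
        then have "Tl k (Pl (\<theta> r) \<alpha>) r = 0" using val[OF that] by (simp add: t_def)
        then show ?thesis using Max_nonneg_abs[of "{1..m}"] cardSg by (simp add: MG_def m_def)
      next
        case False
        have "card (Sg \<inter> {..<t}) \<le> m" unfolding m_def using finSg by (intro card_mono) auto
        moreover have "1 \<le> card (Sg \<inter> {..<t})" using False by linarith
        ultimately have mem: "card (Sg \<inter> {..<t}) \<in> {1..m}" by simp
        have "\<bar>greedy_sum p uu (card (Sg \<inter> {..<t})) x (St k + r)\<bar> \<le> MG (St k + r)"
          unfolding MG_def by (rule Max_ge_abs[OF _ mem]) simp
        then show ?thesis using v lam_pos by (simp add: abs_divide)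
      qed
    qed
    have "lp_norm p MG \<ge> (\<Sum>r<Lb k. \<bar>MG (St k + r)\<bar> powr p) powr (1/p)"
      by (rule block_norm_lower) (rule MGv)
    moreover have "(\<Sum>r<Lb k. \<bar>MG (St k + r)\<bar> powr p) \<ge> (\<Sum>r<Lb k. (\<bar>Tl k (Pl (\<theta> r) \<alpha>) r\<bar> / lam) powr p)"
      using MGl p0 lam_pos by (intro sum_mono powr_mono2) (auto intro: order_trans[OF _ abs_ge_self])
    moreover have "(\<Sum>r<Lb k. (\<bar>Tl k (Pl (\<theta> r) \<alpha>) r\<bar> / lam) powr p) powr (1/p)
        = (\<Sum>r<Lb k. \<bar>Tl k (Pl (\<theta> r) \<alpha>) r\<bar> powr p) powr (1/p) / lam"
      using lam_pos p0 by (simp add: powr_divide sum_divide_distrib[symmetric] powr_powr sum_nonneg)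
    ultimately have "lp_norm p MG \<ge> (\<Sum>r<Lb k. \<bar>Tl k (Pl (\<theta> r) \<alpha>) r\<bar> powr p) powr (1/p) / lam"
    proof -
      assume a1: "lp_norm p MG \<ge> (\<Sum>r<Lb k. \<bar>MG (St k + r)\<bar> powr p) powr (1/p)"
        and a2: "(\<Sum>r<Lb k. \<bar>MG (St k + r)\<bar> powr p) \<ge> (\<Sum>r<Lb k. (\<bar>Tl k (Pl (\<theta> r) \<alpha>) r\<bar> / lam) powr p)"
        and a3: "(\<Sum>r<Lb k. (\<bar>Tl k (Pl (\<theta> r) \<alpha>) r\<bar> / lam) powr p) powr (1/p)
        = (\<Sum>r<Lb k. \<bar>Tl k (Pl (\<theta> r) \<alpha>) r\<bar> powr p) powr (1/p) / lam"
      from a2 have "(\<Sum>r<Lb k. (\<bar>Tl k (Pl (\<theta> r) \<alpha>) r\<bar> / lam) powr p) powr (1/p) \<le> (\<Sum>r<Lb k. \<bar>MG (St k + r)\<bar> powr p) powr (1/p)"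
        using p0 by (intro powr_mono2) (auto intro!: sum_nonneg)
      then show ?thesis using a1 a3 by linarith
    qed
    moreover have "(\<Sum>r<Lb k. \<bar>Tl k (Pl (\<theta> r) \<alpha>) r\<bar> powr p) powr (1/p) / lam \<ge> F powr (1/p)"
      using low lam_pos by (simp add: pos_le_divide_eq)
    ultimately show "lp_norm p (\<lambda>i. Max ((\<lambda>n. \<bar>greedy_sum p uu n x i\<bar>) ` {1..m})) \<ge> F powr (1/p)"
      by (simp add: MG_def[abs_def])
  qed
  qed
qed

end



context blocksys
begin

lemma fails:
  assumes H: "\<And>F0. \<exists>k Sp \<theta> F. F > F0 \<and> F \<ge> 0 \<and> Sp \<subseteq> {..<Lb k} \<and> (\<forall>r<Lb k. \<theta> r \<le> Lb k) \<and>
      (\<Sum>r<Lb k. \<bar>Tl k (\<lambda>r. if r \<in> Sp then 1 else 0) r\<bar> powr p) > 0 \<and>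
      (\<Sum>r<Lb k. \<bar>Tl k (Pl (\<theta> r) (\<lambda>r. if r \<in> Sp then 1 else 0)) r\<bar> powr p)
        \<ge> F * (\<Sum>r<Lb k. \<bar>Tl k (\<lambda>r. if r \<in> Sp then 1 else 0) r\<bar> powr p)"
  shows "\<not> bibasic p uu" "\<not> uniformly_quasi_greedy p uu"
proof -
  have big: "F powr (1/p) > B" if "F > (max B 1) powr p" "F \<ge> 0" for F B
  proof -
    have "(max B 1 powr p) powr (1/p) < F powr (1/p)"
      using that p0 by (intro powr_less_mono2) auto
    then have "max B 1 < F powr (1/p)" using p0 by (simp add: powr_powr)
    then show ?thesis by simp
  qed
  show "\<not> bibasic p uu"
  proof
    assume "bibasic p uu"
    then obtain M where M: "M \<ge> 1" "\<And>m a. lp_norm p (\<lambda>i. Max ((\<lambda>n. \<bar>lincomb a uu (Suc n) i\<bar>) ` {..m}))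
          \<le> M * lp_norm p (lincomb a uu (Suc m))"
      unfolding bibasic_def by blast
    obtain k Sp \<theta> F where F: "F > (max M 1) powr p" "F \<ge> 0" "Sp \<subseteq> {..<Lb k}" "\<forall>r<Lb k. \<theta> r \<le> Lb k"
      "(\<Sum>r<Lb k. \<bar>Tl k (\<lambda>r. if r \<in> Sp then 1 else 0) r\<bar> powr p) > 0"
      "(\<Sum>r<Lb k. \<bar>Tl k (Pl (\<theta> r) (\<lambda>r. if r \<in> Sp then 1 else 0)) r\<bar> powr p)
        \<ge> F * (\<Sum>r<Lb k. \<bar>Tl k (\<lambda>r. if r \<in> Sp then 1 else 0) r\<bar> powr p)"
      using H by blast
    from bad_block(1)[OF F(3) refl _ F(5) F(6) F(2)] F(4)
    obtain m a where ma: "lp_norm p (\<lambda>i. Max ((\<lambda>n. \<bar>lincomb a uu (Suc n) i\<bar>) ` {..m}))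
                 \<ge> F powr (1/p) * lp_norm p (lincomb a uu (Suc m))" "lp_norm p (lincomb a uu (Suc m)) > 0"
      by blast
    have "M * lp_norm p (lincomb a uu (Suc m)) < F powr (1/p) * lp_norm p (lincomb a uu (Suc m))"
      using big[OF F(1) F(2)] ma(2) by (intro mult_strict_right_mono) auto
    then show False using ma(1) M(2)[of a m] by linarith
  qed
  show "\<not> uniformly_quasi_greedy p uu"
  proof
    assume "uniformly_quasi_greedy p uu"
    then obtain B where B: "\<And>m x. m \<ge> 1 \<Longrightarrow> x \<in> lp p \<Longrightarrow> (\<exists>a. has_expansion p uu x a) \<Longrightarrow> lp_norm p x = 1 \<Longrightarrow>
      lp_norm p (\<lambda>i. Max ((\<lambda>n. \<bar>greedy_sum p uu n x i\<bar>) ` {1..m})) \<le> B"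
      unfolding uniformly_quasi_greedy_def by blast
    obtain k Sp \<theta> F where F: "F > (max B 1) powr p" "F \<ge> 0" "Sp \<subseteq> {..<Lb k}" "\<forall>r<Lb k. \<theta> r \<le> Lb k"
      "(\<Sum>r<Lb k. \<bar>Tl k (\<lambda>r. if r \<in> Sp then 1 else 0) r\<bar> powr p) > 0"
      "(\<Sum>r<Lb k. \<bar>Tl k (Pl (\<theta> r) (\<lambda>r. if r \<in> Sp then 1 else 0)) r\<bar> powr p)
        \<ge> F * (\<Sum>r<Lb k. \<bar>Tl k (\<lambda>r. if r \<in> Sp then 1 else 0) r\<bar> powr p)"
      using H by blast
    from bad_block(2)[OF F(3) refl _ F(5) F(6) F(2)] F(4)
    obtain m x where mx: "m \<ge> 1" "x \<in> lp p" "\<exists>a. has_expansion p uu x a" "lp_norm p x = 1"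
      "lp_norm p (\<lambda>i. Max ((\<lambda>n. \<bar>greedy_sum p uu n x i\<bar>) ` {1..m})) \<ge> F powr (1/p)"
      by blast
    then show False using B[OF mx(1-4)] big[OF F(1) F(2)] by linarith
  qed
qed

end

definition Ysz :: "nat \<Rightarrow> nat" where "Ysz k = 2 * 2 ^ k * k * 2 ^ k"

lemma Lb_Ysz: "Lb k = 2 ^ k + Ysz k" by (simp add: Lb_def Ysz_def)

definition dc :: "nat \<Rightarrow> nat \<Rightarrow> nat" where "dc k y = y mod 2 ^ k"
definition dt :: "nat \<Rightarrow> nat \<Rightarrow> nat" where "dt k y = (y div 2 ^ k) mod k"
definition dM :: "nat \<Rightarrow> nat \<Rightarrow> nat" where "dM k y = (y div 2 ^ k div k) mod 2 ^ k"
definition ds :: "nat \<Rightarrow> nat \<Rightarrow> nat" where "ds k y = y div 2 ^ k div k div 2 ^ k"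

definition ky :: "nat \<Rightarrow> nat \<Rightarrow> nat \<Rightarrow> real" where
  "ky k y x = kern k (ds k y) (dM k y) (dt k y) (dc k y) x"

lemma sum_mult_split: "(\<Sum>y<A * B. f y) = (\<Sum>a<A. \<Sum>b<B. f (a * B + b))"
  for A B :: nat
proof (induction A)
  case 0 then show ?case by simp
next
  case (Suc A)
  have "(\<Sum>y<Suc A * B. f y) = (\<Sum>y<A * B + B. f y)" by (simp add: add.commute)
  also have "\<dots> = (\<Sum>y<A * B. f y) + (\<Sum>b<B. f (A * B + b))" by (rule sum_lessThan_add)
  finally show ?case using Suc by simp
qed

lemma dec_enc:
  assumes "s < 2" "M < 2 ^ k" "t < k" "c < 2 ^ k"
  defines "y \<equiv> ((s * 2 ^ k + M) * k + t) * 2 ^ k + c"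
  shows "dc k y = c" "dt k y = t" "dM k y = M" "ds k y = s"
proof -
  have N0: "(2::nat) ^ k > 0" by simp
  have d1: "y div 2 ^ k = (s * 2 ^ k + M) * k + t" using assms(4) by (simp add: y_def)
  show "dc k y = c" using assms(4) by (simp add: dc_def y_def)
  show "dt k y = t" using assms(3) by (simp add: dt_def d1)
  have d2: "y div 2 ^ k div k = s * 2 ^ k + M" using assms(3) by (simp add: d1)
  show "dM k y = M" using assms(2) by (simp add: dM_def d2)
  show "ds k y = s" using assms(2) by (simp add: ds_def d2)
qed

lemma sum_Y: "(\<Sum>y<Ysz k. f y) = (\<Sum>s<2. \<Sum>M<2 ^ k. \<Sum>t<k. \<Sum>c<2 ^ k. f (((s * 2 ^ k + M) * k + t) * 2 ^ k + c))"
  unfolding Ysz_def sum_mult_split by simp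

lemma sum_Y_ky: "(\<Sum>y<Ysz k. g y (ky k y)) = (\<Sum>s<2. \<Sum>M<2 ^ k. \<Sum>t<k. \<Sum>c<2 ^ k.
     g (((s * 2 ^ k + M) * k + t) * 2 ^ k + c) (kern k s M t c))"
  unfolding sum_Y ky_def by (intro sum.cong refl) (simp add: dec_enc)

lemma ky_contract:
  assumes "r \<ge> 2"
  shows "(\<Sum>y<Ysz k. \<bar>\<Sum>x<2 ^ k. ky k y x * a x\<bar> powr r) \<le> (\<Sum>x<2 ^ k. \<bar>a x\<bar> powr r)"
  using kern_contract[OF assms, of k a]
  by (subst sum_Y_ky[where g="\<lambda>y h. \<bar>\<Sum>x<2 ^ k. h x * a x\<bar> powr r"]) simp



lemma hsum_one: "hsum (\<lambda>_. 1) t j = 2 ^ t"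
  by (simp add: hsum_def algebra_simps)

lemma hh_sum_all:
  assumes "act k M t"
  shows "(\<Sum>x<(2::nat) ^ k. hh M t x) = 0"
  using hh_inner[OF act_bounds(1)[OF assms] act_bounds(2)[OF assms], of "\<lambda>_. 1"]
  by (simp add: hsum_one)

lemma hh_sum_below:
  assumes "act k M t"
  shows "(\<Sum>x<(2::nat) ^ k. if x < M then hh M t x else 0) = 2 ^ t"
proof -
  have b: "2 ^ t \<le> M" "M + 2 ^ t \<le> 2 ^ k" using act_bounds[OF assms] by auto
  have "(\<Sum>x<(2::nat) ^ k. if x < M then hh M t x else 0) = (\<Sum>x<(2::nat) ^ k. if x \<in> {M - 2 ^ t..<M} then 1 else 0)"
    by (intro sum.cong) (auto simp: hh_def)
  also have "\<dots> = (\<Sum>x\<in>{M - 2 ^ t..<M}. (1::real))"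
    using b by (intro sum_indicator_ivl) auto
  also have "\<dots> = 2 ^ t" using b by simp
  finally show ?thesis .
qed

lemma act_count:
  "2 * (\<Sum>M<(2::nat) ^ k. \<Sum>t<k. if act k M t then (2::real) ^ t else 0) = real k * 2 ^ k"
proof -
  have "(\<Sum>M<(2::nat) ^ k. \<Sum>t<k. if act k M t then (2::real) ^ t else 0)
      = (\<Sum>t<k. \<Sum>M<(2::nat) ^ k. if act k M t then (2::real) ^ t else 0)" by (rule sum.swap)
  also have "\<dots> = (\<Sum>t<k. 2 ^ k / 2)"
  proof (rule sum.cong[OF refl])
    fix t assume "t \<in> {..<k}"
    then have tk: "t < k" by simp
    have "(\<Sum>M<(2::nat) ^ k. if act k M t then (2::real) ^ t else 0)
        = (\<Sum>M<(2::nat) ^ k. if M mod 2 ^ Suc t = 2 ^ t then (2::real) ^ t else 0)"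
      using tk by (intro sum.cong) (auto simp: act_def)
    also have "\<dots> = (\<Sum>j<(2::nat) ^ (k - Suc t). (2::real) ^ t)" by (rule act_reindex[OF tk])
    also have "\<dots> = 2 ^ (k - Suc t) * 2 ^ t" by simp
    also have "\<dots> = 2 ^ k / 2"
    proof -
      have "(2::real) ^ (k - Suc t) * 2 ^ t * 2 = 2 ^ (k - Suc t + Suc t)" by (simp add: power_add)
      also have "k - Suc t + Suc t = k" using tk by simp
      finally show ?thesis by simp
    qed
    finally show "(\<Sum>M<(2::nat) ^ k. if act k M t then (2::real) ^ t else 0) = 2 ^ k / 2" .
  qed
  finally show ?thesis by simp
qed

lemma kern_row_count:
  "(\<Sum>s<(2::nat). \<Sum>M<(2::nat) ^ k. \<Sum>t<k. \<Sum>c<(2::nat) ^ k. if act k M t \<and> c < 2 ^ t then (1::real) else 0) = real k * 2 ^ k"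
proof -
  have c: "(\<Sum>c<(2::nat) ^ k. if act k M t \<and> c < 2 ^ t then (1::real) else 0) = (if act k M t then 2 ^ t else 0)" for M t
  proof (cases "act k M t")
    case True
    then have "t < k" by (simp add: act_def)
    then have "(2::nat) ^ t \<le> 2 ^ k" by (intro power_increasing) auto
    then have "{c \<in> {..<(2::nat) ^ k}. c < 2 ^ t} = {..<2 ^ t}" by (auto intro: less_le_trans)
    then have "(\<Sum>c<(2::nat) ^ k. if c < 2 ^ t then (1::real) else 0) = (\<Sum>c<(2::nat) ^ t. 1)"
      by (simp add: sum.inter_filter[symmetric])
    then show ?thesis using True by simp
  qed simp
  show ?thesis using act_count[of k] by (simp add: c)
qed

definition GA :: "nat \<Rightarrow> nat \<Rightarrow> nat \<Rightarrow> real" where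
  "GA k i j = (if 2 ^ k \<le> i \<and> i < Lb k \<and> j < 2 ^ k then ky k (i - 2 ^ k) j else 0)"

lemma sum_Lb: "(\<Sum>i<Lb k. f i) = (\<Sum>i<2 ^ k. f i) + (\<Sum>y<Ysz k. f (2 ^ k + y))"
  unfolding Lb_Ysz by (rule sum_lessThan_add)

lemma GA_row:
  assumes "y < Ysz k"
  shows "(\<Sum>j<Lb k. GA k (2 ^ k + y) j * \<beta> j) = (\<Sum>x<2 ^ k. ky k y x * \<beta> x)"
proof -
  have "(\<Sum>j<Lb k. GA k (2 ^ k + y) j * \<beta> j) = (\<Sum>j<2 ^ k. GA k (2 ^ k + y) j * \<beta> j)"
    by (rule sum_zero_tail) (auto simp: GA_def Lb_Ysz)
  also have "\<dots> = (\<Sum>x<2 ^ k. ky k y x * \<beta> x)"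
    using assms by (intro sum.cong) (auto simp: GA_def Lb_Ysz)
  finally show ?thesis .
qed

lemma GA_con:
  assumes "p \<ge> 2"
  shows "(\<Sum>i<Lb k. \<bar>\<Sum>j<Lb k. GA k i j * \<beta> j\<bar> powr p) \<le> (\<Sum>i<Lb k. \<bar>\<beta> i\<bar> powr p)"
proof -
  have "(\<Sum>i<Lb k. \<bar>\<Sum>j<Lb k. GA k i j * \<beta> j\<bar> powr p)
      = (\<Sum>i<2 ^ k. \<bar>\<Sum>j<Lb k. GA k i j * \<beta> j\<bar> powr p) + (\<Sum>y<Ysz k. \<bar>\<Sum>j<Lb k. GA k (2 ^ k + y) j * \<beta> j\<bar> powr p)"
    by (rule sum_Lb)
  also have "(\<Sum>i<2 ^ k. \<bar>\<Sum>j<Lb k. GA k i j * \<beta> j\<bar> powr p) = 0"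
    by (intro sum.neutral) (auto simp: GA_def)
  also have "(\<Sum>y<Ysz k. \<bar>\<Sum>j<Lb k. GA k (2 ^ k + y) j * \<beta> j\<bar> powr p)
      = (\<Sum>y<Ysz k. \<bar>\<Sum>x<2 ^ k. ky k y x * \<beta> x\<bar> powr p)"
    by (intro sum.cong) (auto simp: GA_row)
  also have "\<dots> \<le> (\<Sum>x<2 ^ k. \<bar>\<beta> x\<bar> powr p)" by (rule ky_contract[OF assms])
  also have "\<dots> \<le> (\<Sum>i<Lb k. \<bar>\<beta> i\<bar> powr p)" unfolding sum_Lb by (simp add: sum_nonneg)
  finally show ?thesis by simp
qed

lemma GA_nil: "GA k i j \<noteq> 0 \<Longrightarrow> GA k j l = 0"
  by (auto simp: GA_def split: if_splits)



lemma kern_sum_all: "(\<Sum>x<(2::nat) ^ k. kern k s M t c x) = 0"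
proof (cases "act k M t \<and> c < 2 ^ t")
  case True
  then have "(\<Sum>x<(2::nat) ^ k. kern k s M t c x) = (if s = 0 then 1 else -1) / 2 ^ Suc t * (\<Sum>x<(2::nat) ^ k. hh M t x)"
    by (simp add: kern_def sum_distrib_left)
  then show ?thesis using hh_sum_all True by simp
next
  case False
  then have "\<forall>x. kern k s M t c x = 0" unfolding kern_def by auto
  then show ?thesis by simp
qed

lemma kern_sum_below:
  "\<bar>\<Sum>x<(2::nat) ^ k. kern k s M t c x * (if x < M then 1 else 0)\<bar> = (if act k M t \<and> c < 2 ^ t then 1/2 else 0)"
proof (cases "act k M t \<and> c < 2 ^ t")
  case True
  have "(\<Sum>x<(2::nat) ^ k. kern k s M t c x * (if x < M then 1 else 0))
      = (if s = 0 then 1 else -1) / 2 ^ Suc t * (\<Sum>x<(2::nat) ^ k. if x < M then hh M t x else 0)"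
    using True by (simp add: kern_def sum_distrib_left if_distrib cong: if_cong)
  also have "\<dots> = (if s = 0 then 1 else -1) / 2 ^ Suc t * 2 ^ t" using hh_sum_below True by simp
  also have "\<dots> = (if s = 0 then 1/2 else -1/2)" by (simp add: field_simps)
  finally show ?thesis using True by simp
next
  case False
  then have "\<forall>x. kern k s M t c x = 0" unfolding kern_def by auto
  then show ?thesis using False by (simp del: de_Morgan_conj)
qed

lemma ky_sum_all: "(\<Sum>x<(2::nat) ^ k. ky k y x) = 0"
  by (simp add: ky_def kern_sum_all)

lemma caseA_vals:
  fixes p :: real and k :: nat
  assumes p: "p > 0"
  defines "\<alpha> \<equiv> (\<lambda>r. if r \<in> {..<(2::nat) ^ k} then (1::real) else 0)"
    and "\<theta> \<equiv> (\<lambda>r. if 2 ^ k \<le> r \<and> r < Lb k then dM k (r - 2 ^ k) else Lb k)"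
  shows "(\<Sum>r<Lb k. \<bar>\<alpha> r + (\<Sum>r'<Lb k. GA k r r' * \<alpha> r')\<bar> powr p) = 2 ^ k"
    and "(\<Sum>r<Lb k. \<bar>(if r < \<theta> r then \<alpha> r else 0) + (\<Sum>r'<Lb k. GA k r r' * (if r' < \<theta> r then \<alpha> r' else 0))\<bar> powr p)
          \<ge> real k * (1/2) powr p * 2 ^ k"
    and "\<forall>r<Lb k. \<theta> r \<le> Lb k"
proof -
  have GA0: "GA k r r' = 0" if "r < 2 ^ k" for r r' using that by (simp add: GA_def)
  show "(\<Sum>r<Lb k. \<bar>\<alpha> r + (\<Sum>r'<Lb k. GA k r r' * \<alpha> r')\<bar> powr p) = 2 ^ k"
  proof -
    have "(\<Sum>r<Lb k. \<bar>\<alpha> r + (\<Sum>r'<Lb k. GA k r r' * \<alpha> r')\<bar> powr p)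
      = (\<Sum>r<2 ^ k. \<bar>\<alpha> r + (\<Sum>r'<Lb k. GA k r r' * \<alpha> r')\<bar> powr p)
        + (\<Sum>y<Ysz k. \<bar>\<alpha> (2 ^ k + y) + (\<Sum>r'<Lb k. GA k (2 ^ k + y) r' * \<alpha> r')\<bar> powr p)"
      by (rule sum_Lb)
    also have "(\<Sum>r<2 ^ k. \<bar>\<alpha> r + (\<Sum>r'<Lb k. GA k r r' * \<alpha> r')\<bar> powr p) = (\<Sum>r<(2::nat) ^ k. 1)"
      by (intro sum.cong) (auto simp: GA0 \<alpha>_def)
    also have "(\<Sum>y<Ysz k. \<bar>\<alpha> (2 ^ k + y) + (\<Sum>r'<Lb k. GA k (2 ^ k + y) r' * \<alpha> r')\<bar> powr p) = 0"
    proof (intro sum.neutral ballI)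
      fix y assume y: "y \<in> {..<Ysz k}"
      have "(\<Sum>r'<Lb k. GA k (2 ^ k + y) r' * \<alpha> r') = (\<Sum>x<2 ^ k. ky k y x * \<alpha> x)"
        using y by (intro GA_row) auto
      also have "\<dots> = (\<Sum>x<2 ^ k. ky k y x)" by (intro sum.cong) (auto simp: \<alpha>_def)
      also have "\<dots> = 0" by (rule ky_sum_all)
      finally show "\<bar>\<alpha> (2 ^ k + y) + (\<Sum>r'<Lb k. GA k (2 ^ k + y) r' * \<alpha> r')\<bar> powr p = 0"
        by (simp add: \<alpha>_def)
    qed
    finally show ?thesis by simp
  qed
  show "\<forall>r<Lb k. \<theta> r \<le> Lb k"
  proof (intro allI impI)
    fix r assume "r < Lb k"
    have "dM k (r - 2 ^ k) < 2 ^ k" by (simp add: dM_def)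
    then show "\<theta> r \<le> Lb k" by (simp add: \<theta>_def Lb_Ysz)
  qed
  show "(\<Sum>r<Lb k. \<bar>(if r < \<theta> r then \<alpha> r else 0) + (\<Sum>r'<Lb k. GA k r r' * (if r' < \<theta> r then \<alpha> r' else 0))\<bar> powr p)
          \<ge> real k * (1/2) powr p * 2 ^ k"
  proof -
    define f where "f r = \<bar>(if r < \<theta> r then \<alpha> r else 0) + (\<Sum>r'<Lb k. GA k r r' * (if r' < \<theta> r then \<alpha> r' else 0))\<bar> powr p" for r
    have yv: "f (2 ^ k + y) = \<bar>\<Sum>x<2 ^ k. ky k y x * (if x < dM k y then 1 else 0)\<bar> powr p" if "y < Ysz k" for y
    proof -
      have th: "\<theta> (2 ^ k + y) = dM k y" using that by (simp add: \<theta>_def Lb_Ysz)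
      have "(\<Sum>r'<Lb k. GA k (2 ^ k + y) r' * (if r' < \<theta> (2 ^ k + y) then \<alpha> r' else 0))
          = (\<Sum>x<2 ^ k. ky k y x * (if x < \<theta> (2 ^ k + y) then \<alpha> x else 0))"
        using that by (intro GA_row) auto
      also have "\<dots> = (\<Sum>x<2 ^ k. ky k y x * (if x < dM k y then 1 else 0))"
        by (intro sum.cong) (auto simp: th \<alpha>_def)
      finally show ?thesis by (simp add: f_def \<alpha>_def)
    qed
    have "(\<Sum>y<Ysz k. f (2 ^ k + y)) = (\<Sum>y<Ysz k. \<bar>\<Sum>x<2 ^ k. ky k y x * (if x < dM k y then 1 else 0)\<bar> powr p)"
      by (intro sum.cong) (auto simp: yv)
    also have "\<dots> = (\<Sum>s<2. \<Sum>M<(2::nat) ^ k. \<Sum>t<k. \<Sum>c<(2::nat) ^ k.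
        \<bar>\<Sum>x<2 ^ k. kern k s M t c x * (if x < M then 1 else 0)\<bar> powr p)"
      unfolding sum_Y ky_def by (intro sum.cong refl) (simp add: dec_enc)
    also have "\<dots> = (\<Sum>s<(2::nat). \<Sum>M<(2::nat) ^ k. \<Sum>t<k. \<Sum>c<(2::nat) ^ k.
        (1/2) powr p * (if act k M t \<and> c < 2 ^ t then (1::real) else 0))"
      unfolding kern_sum_below using p by (intro sum.cong refl) auto
    also have "\<dots> = (1/2) powr p * (\<Sum>s<(2::nat). \<Sum>M<(2::nat) ^ k. \<Sum>t<k. \<Sum>c<(2::nat) ^ k.
        (if act k M t \<and> c < 2 ^ t then (1::real) else 0))"
      by (simp only: sum_distrib_left)
    also have "\<dots> = (1/2) powr p * (real k * 2 ^ k)" by (simp only: kern_row_count)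
    finally have ys: "(\<Sum>y<Ysz k. f (2 ^ k + y)) = (1/2) powr p * (real k * 2 ^ k)" .
    have "(\<Sum>r<Lb k. f r) = (\<Sum>r<2 ^ k. f r) + (\<Sum>y<Ysz k. f (2 ^ k + y))" by (rule sum_Lb)
    moreover have "(\<Sum>r<2 ^ k. f r) \<ge> 0" by (auto simp: f_def intro!: sum_nonneg)
    ultimately show ?thesis using ys by (simp add: f_def[abs_def] mult_ac)
  qed
qed



definition GB :: "nat \<Rightarrow> nat \<Rightarrow> nat \<Rightarrow> real" where
  "GB k i j = (if i < 2 ^ k \<and> 2 ^ k \<le> j \<and> j < Lb k then ky k (j - 2 ^ k) i else 0)"

lemma GB_nil: "GB k i j \<noteq> 0 \<Longrightarrow> GB k j l = 0"
  by (auto simp: GB_def split: if_splits)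

lemma GB_row:
  assumes "i < 2 ^ k"
  shows "(\<Sum>j<Lb k. GB k i j * \<beta> j) = (\<Sum>y<Ysz k. ky k y i * \<beta> (2 ^ k + y))"
proof -
  have "(\<Sum>j<Lb k. GB k i j * \<beta> j) = (\<Sum>j<2 ^ k. GB k i j * \<beta> j) + (\<Sum>y<Ysz k. GB k i (2 ^ k + y) * \<beta> (2 ^ k + y))"
    by (rule sum_Lb)
  also have "(\<Sum>j<2 ^ k. GB k i j * \<beta> j) = 0" by (intro sum.neutral) (auto simp: GB_def)
  also have "(\<Sum>y<Ysz k. GB k i (2 ^ k + y) * \<beta> (2 ^ k + y)) = (\<Sum>y<Ysz k. ky k y i * \<beta> (2 ^ k + y))"
    using assms by (intro sum.cong) (auto simp: GB_def Lb_Ysz)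
  finally show ?thesis by simp
qed

lemma GB_row0:
  assumes "\<not> i < 2 ^ k"
  shows "(\<Sum>j<Lb k. GB k i j * \<beta> j) = 0"
  using assms by (intro sum.neutral) (auto simp: GB_def)

lemma GB_con:
  assumes p: "1 < p" "p \<le> 2"
  shows "(\<Sum>i<Lb k. \<bar>\<Sum>j<Lb k. GB k i j * \<beta> j\<bar> powr p) \<le> (\<Sum>i<Lb k. \<bar>\<beta> i\<bar> powr p)"
proof -
  define q where "q = p / (p - 1)"
  have pq: "1/p + 1/q = 1" using p by (simp add: q_def field_simps)
  have q2: "q \<ge> 2" using p by (simp add: q_def field_simps)
  have "(\<Sum>i<Lb k. \<bar>\<Sum>j<Lb k. GB k i j * \<beta> j\<bar> powr p)
      = (\<Sum>i<2 ^ k. \<bar>\<Sum>j<Lb k. GB k i j * \<beta> j\<bar> powr p) + (\<Sum>y<Ysz k. \<bar>\<Sum>j<Lb k. GB k (2 ^ k + y) j * \<beta> j\<bar> powr p)"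
    by (rule sum_Lb)
  also have "(\<Sum>y<Ysz k. \<bar>\<Sum>j<Lb k. GB k (2 ^ k + y) j * \<beta> j\<bar> powr p) = 0"
    using p by (intro sum.neutral) (auto simp: GB_row0)
  also have "(\<Sum>i<2 ^ k. \<bar>\<Sum>j<Lb k. GB k i j * \<beta> j\<bar> powr p) = (\<Sum>i<2 ^ k. \<bar>\<Sum>y<Ysz k. ky k y i * \<beta> (2 ^ k + y)\<bar> powr p)"
    by (intro sum.cong) (auto simp: GB_row)
  also have "\<dots> \<le> (\<Sum>y<Ysz k. \<bar>\<beta> (2 ^ k + y)\<bar> powr p)"
    by (rule dual_contract[where K="ky k" and q=q]) (use p pq ky_contract[OF q2] in auto)
  also have "\<dots> \<le> (\<Sum>i<Lb k. \<bar>\<beta> i\<bar> powr p)" unfolding sum_Lb by (simp add: sum_nonneg)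
  finally show ?thesis by simp
qed

definition actrow :: "nat \<Rightarrow> nat \<Rightarrow> bool" where
  "actrow k y \<longleftrightarrow> act k (dM k y) (dt k y) \<and> dc k y < 2 ^ dt k y"

lemma ky_actrow: "\<not> actrow k y \<Longrightarrow> ky k y x = 0"
  unfolding ky_def kern_def actrow_def by auto

lemma kern_pair: "kern k 0 M t c x + kern k 1 M t c x = 0"
  by (simp add: kern_def)

lemma caseB_vals1:
  fixes p :: real and k :: nat
  assumes p: "p > 0"
  defines "\<alpha> \<equiv> (\<lambda>r. if r \<in> {r. 2 ^ k \<le> r \<and> r < Lb k \<and> actrow k (r - 2 ^ k)} then (1::real) else 0)"
  shows "(\<Sum>r<Lb k. \<bar>\<alpha> r + (\<Sum>r'<Lb k. GB k r r' * \<alpha> r')\<bar> powr p) = real k * 2 ^ k"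
proof -
  have "(\<Sum>r<Lb k. \<bar>\<alpha> r + (\<Sum>r'<Lb k. GB k r r' * \<alpha> r')\<bar> powr p)
      = (\<Sum>r<2 ^ k. \<bar>\<alpha> r + (\<Sum>r'<Lb k. GB k r r' * \<alpha> r')\<bar> powr p)
        + (\<Sum>y<Ysz k. \<bar>\<alpha> (2 ^ k + y) + (\<Sum>r'<Lb k. GB k (2 ^ k + y) r' * \<alpha> r')\<bar> powr p)"
    by (rule sum_Lb)
  also have "(\<Sum>r<2 ^ k. \<bar>\<alpha> r + (\<Sum>r'<Lb k. GB k r r' * \<alpha> r')\<bar> powr p) = 0"
  proof (intro sum.neutral ballI)
    fix r assume r: "r \<in> {..<(2::nat) ^ k}"
    have "(\<Sum>r'<Lb k. GB k r r' * \<alpha> r') = (\<Sum>y<Ysz k. ky k y r * \<alpha> (2 ^ k + y))"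
      using r by (intro GB_row) auto
    also have "\<dots> = (\<Sum>y<Ysz k. ky k y r)"
      by (intro sum.cong) (auto simp: \<alpha>_def Lb_Ysz ky_actrow)
    also have "\<dots> = (\<Sum>s<(2::nat). \<Sum>M<(2::nat) ^ k. \<Sum>t<k. \<Sum>c<(2::nat) ^ k. kern k s M t c r)"
      unfolding sum_Y ky_def by (intro sum.cong refl) (simp add: dec_enc)
    also have "\<dots> = 0"
    proof -
      have "kern k (Suc 0) M t c r = - kern k 0 M t c r" for M t c
        using kern_pair[of k M t c r] by simp
      then show ?thesis by (simp add: numeral_2_eq_2 sum_negf)
    qed
    finally show "\<bar>\<alpha> r + (\<Sum>r'<Lb k. GB k r r' * \<alpha> r')\<bar> powr p = 0" using r by (simp add: \<alpha>_def)
  qed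
  also have "(\<Sum>y<Ysz k. \<bar>\<alpha> (2 ^ k + y) + (\<Sum>r'<Lb k. GB k (2 ^ k + y) r' * \<alpha> r')\<bar> powr p)
      = (\<Sum>y<Ysz k. if actrow k y then 1 else 0)"
  proof (intro sum.cong refl)
    fix y assume y: "y \<in> {..<Ysz k}"
    have "(\<Sum>r'<Lb k. GB k (2 ^ k + y) r' * \<alpha> r') = 0" by (rule GB_row0) simp
    then show "\<bar>\<alpha> (2 ^ k + y) + (\<Sum>r'<Lb k. GB k (2 ^ k + y) r' * \<alpha> r')\<bar> powr p = (if actrow k y then 1 else 0)"
      using y p by (simp add: \<alpha>_def Lb_Ysz)
  qed
  also have "\<dots> = (\<Sum>s<(2::nat). \<Sum>M<(2::nat) ^ k. \<Sum>t<k. \<Sum>c<(2::nat) ^ k. if act k M t \<and> c < 2 ^ t then 1 else 0)"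
    unfolding sum_Y actrow_def by (intro sum.cong refl) (simp add: dec_enc)
  also have "\<dots> = real k * 2 ^ k" by (rule kern_row_count)
  finally show ?thesis by simp
qed



definition Acnt :: "nat \<Rightarrow> nat \<Rightarrow> real" where
  "Acnt k r = (\<Sum>M<(2::nat) ^ k. \<Sum>t<k. if act k M t \<and> M \<le> r \<and> r < M + 2 ^ t then 1 else 0)"

lemma Acnt_sum: "(\<Sum>r<(2::nat) ^ k. Acnt k r) = real k * 2 ^ k / 2"
proof -
  have "(\<Sum>r<(2::nat) ^ k. Acnt k r) = (\<Sum>M<(2::nat) ^ k. \<Sum>t<k. \<Sum>r<(2::nat) ^ k. if act k M t \<and> M \<le> r \<and> r < M + 2 ^ t then (1::real) else 0)"
    unfolding Acnt_def by (subst sum.swap) (simp add: sum.swap[of _ "{..<k}"])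
  also have "\<dots> = (\<Sum>M<(2::nat) ^ k. \<Sum>t<k. if act k M t then (2::real) ^ t else 0)"
  proof (intro sum.cong refl)
    fix M t
    show "(\<Sum>r<(2::nat) ^ k. if act k M t \<and> M \<le> r \<and> r < M + 2 ^ t then (1::real) else 0) = (if act k M t then 2 ^ t else 0)"
    proof (cases "act k M t")
      case True
      have b: "M + 2 ^ t \<le> 2 ^ k" using act_bounds[OF True] by simp
      have "(\<Sum>r<(2::nat) ^ k. if act k M t \<and> M \<le> r \<and> r < M + 2 ^ t then (1::real) else 0)
          = (\<Sum>r<(2::nat) ^ k. if r \<in> {M..<M + 2 ^ t} then 1 else 0)"
        using True by (intro sum.cong) auto
      also have "\<dots> = (\<Sum>r\<in>{M..<M + 2 ^ t}. (1::real))" using b by (intro sum_indicator_ivl) auto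
      finally show ?thesis using True by simp
    qed simp
  qed
  also have "\<dots> = real k * 2 ^ k / 2" using act_count[of k] by simp
  finally show ?thesis .
qed

lemma half_neg: "(- 1 / 2) * (x::real) = - x / 2" by simp

lemma caseB_V:
  fixes k r :: nat
  assumes r: "r < 2 ^ k"
  defines "\<alpha> \<equiv> (\<lambda>r. if r \<in> {r. 2 ^ k \<le> r \<and> r < Lb k \<and> actrow k (r - 2 ^ k)} then (1::real) else 0)"
  shows "(\<Sum>y<Ysz k. ky k y r * (if 2 ^ k + y < 2 ^ k + Suc r * k * 2 ^ k then \<alpha> (2 ^ k + y) else 0)) = - Acnt k r / 2"
proof -
  have le: "Suc r * k * 2 ^ k \<le> Ysz k"
  proof -
    have "Suc r * k * 2 ^ k \<le> 2 ^ k * k * 2 ^ k" using r by (intro mult_right_mono) auto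
    then show ?thesis by (simp add: Ysz_def)
  qed
  have "(\<Sum>y<Ysz k. ky k y r * (if 2 ^ k + y < 2 ^ k + Suc r * k * 2 ^ k then \<alpha> (2 ^ k + y) else 0))
      = (\<Sum>y<Suc r * k * 2 ^ k. ky k y r * (if 2 ^ k + y < 2 ^ k + Suc r * k * 2 ^ k then \<alpha> (2 ^ k + y) else 0))"
    by (rule sum_zero_tail[OF le]) simp
  also have "\<dots> = (\<Sum>y<Suc r * k * 2 ^ k. ky k y r)"
  proof (intro sum.cong refl)
    fix y assume "y \<in> {..<Suc r * k * 2 ^ k}"
    then have y: "y < Suc r * k * 2 ^ k" by simp
    then have "y < Ysz k" using le by linarith
    then show "ky k y r * (if 2 ^ k + y < 2 ^ k + Suc r * k * 2 ^ k then \<alpha> (2 ^ k + y) else 0) = ky k y r"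
      using y by (auto simp: \<alpha>_def Lb_Ysz ky_actrow)
  qed
  also have "\<dots> = (\<Sum>M<Suc r. \<Sum>t<k. \<Sum>c<(2::nat) ^ k. ky k ((M * k + t) * 2 ^ k + c) r)"
    by (simp only: sum_mult_split)
  also have "\<dots> = (\<Sum>M<Suc r. \<Sum>t<k. \<Sum>c<(2::nat) ^ k. kern k 0 M t c r)"
  proof (intro sum.cong refl)
    fix M t c assume "M \<in> {..<Suc r}" "t \<in> {..<k}" "c \<in> {..<(2::nat) ^ k}"
    then have "M < 2 ^ k" "t < k" "c < 2 ^ k" using r by auto
    then show "ky k ((M * k + t) * 2 ^ k + c) r = kern k 0 M t c r"
      using dec_enc[of 0 M k t c] by (simp add: ky_def)
  qed
  also have "\<dots> = (\<Sum>M<Suc r. \<Sum>t<k. if act k M t \<and> r < M + 2 ^ t then - 1 / 2 else 0)"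
  proof (intro sum.cong refl)
    fix M t assume M: "M \<in> {..<Suc r}" "t \<in> {..<k}"
    show "(\<Sum>c<(2::nat) ^ k. kern k 0 M t c r) = (if act k M t \<and> r < M + 2 ^ t then - 1 / 2 else 0)"
    proof (cases "act k M t")
      case True
      then have "t < k" by (simp add: act_def)
      then have tk: "(2::nat) ^ t \<le> 2 ^ k" by (intro power_increasing) auto
      have "(\<Sum>c<(2::nat) ^ k. kern k 0 M t c r) = (\<Sum>c<(2::nat) ^ k. if c < 2 ^ t then hh M t r / 2 ^ Suc t else 0)"
        using True by (intro sum.cong) (auto simp: kern_def)
      also have "\<dots> = (\<Sum>c<(2::nat) ^ t. hh M t r / 2 ^ Suc t)"
      proof -
        have "{c \<in> {..<(2::nat) ^ k}. c < 2 ^ t} = {..<2 ^ t}" using tk by (auto intro: less_le_trans)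
        then show ?thesis by (simp add: sum.inter_filter[symmetric])
      qed
      also have "\<dots> = hh M t r / 2" by (simp add: field_simps)
      also have "\<dots> = (if r < M + 2 ^ t then - 1 / 2 else 0)" using M by (auto simp: hh_def)
      finally show ?thesis using True by simp
    qed (simp add: kern_def)
  qed
  also have "\<dots> = (\<Sum>M<Suc r. \<Sum>t<k. (- 1 / 2) * (if act k M t \<and> r < M + 2 ^ t then 1 else 0))"
    by (intro sum.cong refl) simp
  also have "\<dots> = (- 1 / 2) * (\<Sum>M<Suc r. \<Sum>t<k. if act k M t \<and> r < M + 2 ^ t then 1 else 0)"
    by (simp only: sum_distrib_left[symmetric])
  also have "\<dots> = - (\<Sum>M<Suc r. \<Sum>t<k. if act k M t \<and> r < M + 2 ^ t then 1 else 0) / 2"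
    by (rule half_neg)
  also have "(\<Sum>M<Suc r. \<Sum>t<k. if act k M t \<and> r < M + 2 ^ t then (1::real) else 0) = Acnt k r"
    unfolding Acnt_def
    by (rule sym, rule trans[OF sum_zero_tail[of "Suc r"]]) (use r in \<open>auto intro!: sum.cong sum.neutral\<close>)
  finally show ?thesis .
qed

lemma caseB_vals2:
  fixes p :: real and k :: nat
  assumes p: "p > 1"
  defines "\<alpha> \<equiv> (\<lambda>r. if r \<in> {r. 2 ^ k \<le> r \<and> r < Lb k \<and> actrow k (r - 2 ^ k)} then (1::real) else 0)"
    and "\<theta> \<equiv> (\<lambda>r. if r < 2 ^ k then 2 ^ k + Suc r * k * 2 ^ k else Lb k)"
  shows "\<forall>r<Lb k. \<theta> r \<le> Lb k"
    and "(\<Sum>r<Lb k. \<bar>(if r < \<theta> r then \<alpha> r else 0) + (\<Sum>r'<Lb k. GB k r r' * (if r' < \<theta> r then \<alpha> r' else 0))\<bar> powr p)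
          \<ge> (real k * 2 ^ k / 4) powr p / (2 ^ k) powr (p - 1)"
proof -
  show "\<forall>r<Lb k. \<theta> r \<le> Lb k"
  proof (intro allI impI)
    fix r assume "r < Lb k"
    show "\<theta> r \<le> Lb k"
    proof (cases "r < 2 ^ k")
      case True
      have "Suc r * k * 2 ^ k \<le> 2 ^ k * k * 2 ^ k" using True by (intro mult_right_mono) auto
      then show ?thesis using True by (simp add: \<theta>_def Lb_Ysz Ysz_def)
    qed (simp add: \<theta>_def)
  qed
  define f where "f r = \<bar>(if r < \<theta> r then \<alpha> r else 0) + (\<Sum>r'<Lb k. GB k r r' * (if r' < \<theta> r then \<alpha> r' else 0))\<bar> powr p" for r
  have fr: "f r = (Acnt k r / 2) powr p" if r: "r < 2 ^ k" for r
  proof -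
    have "(\<Sum>r'<Lb k. GB k r r' * (if r' < \<theta> r then \<alpha> r' else 0))
        = (\<Sum>y<Ysz k. ky k y r * (if 2 ^ k + y < \<theta> r then \<alpha> (2 ^ k + y) else 0))"
      using r by (rule GB_row)
    also have "\<dots> = - Acnt k r / 2" unfolding \<theta>_def \<alpha>_def using caseB_V[OF r] r by simp
    finally have "(\<Sum>r'<Lb k. GB k r r' * (if r' < \<theta> r then \<alpha> r' else 0)) = - Acnt k r / 2" .
    moreover have "\<alpha> r = 0" using r by (simp add: \<alpha>_def)
    moreover have "Acnt k r \<ge> 0" by (auto simp: Acnt_def intro!: sum_nonneg)
    ultimately show ?thesis by (simp add: f_def)
  qed
  have A0: "Acnt k r / 2 \<ge> 0" for r by (auto simp: Acnt_def intro!: sum_nonneg)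
  have "(\<Sum>r<Lb k. f r) = (\<Sum>r<2 ^ k. f r) + (\<Sum>y<Ysz k. f (2 ^ k + y))" by (rule sum_Lb)
  moreover have "(\<Sum>y<Ysz k. f (2 ^ k + y)) \<ge> 0" by (auto simp: f_def intro!: sum_nonneg)
  ultimately have "(\<Sum>r<Lb k. f r) \<ge> (\<Sum>r<(2::nat) ^ k. (Acnt k r / 2) powr p)" by (simp add: fr)
  then have i: "(2 ^ k) powr (p - 1) * (\<Sum>r<(2::nat) ^ k. (Acnt k r / 2) powr p) \<le> (2 ^ k) powr (p - 1) * (\<Sum>r<Lb k. f r)"
    by (intro mult_left_mono) auto
  have ii: "(\<Sum>r<(2::nat) ^ k. Acnt k r / 2) powr p \<le> real (card {..<(2::nat) ^ k}) powr (p - 1) * (\<Sum>r<(2::nat) ^ k. (Acnt k r / 2) powr p)"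
    by (rule power_mean_sum) (use p A0 in auto)
  have iii: "(\<Sum>r<(2::nat) ^ k. Acnt k r / 2) = real k * 2 ^ k / 4"
    using Acnt_sum[of k] by (simp add: sum_divide_distrib[symmetric])
  have iv: "real (card {..<(2::nat) ^ k}) = 2 ^ k" by simp
  have "(real k * 2 ^ k / 4) powr p \<le> (2 ^ k) powr (p - 1) * (\<Sum>r<Lb k. f r)"
    using ii i unfolding iii iv by linarith
  then show "(\<Sum>r<Lb k. f r) \<ge> (real k * 2 ^ k / 4) powr p / (2 ^ k) powr (p - 1)"
    by (simp add: divide_le_eq mult.commute)
qed



lemma caseA_H:
  fixes p :: real
  assumes p: "p \<ge> 2"
  shows "\<exists>k Sp \<theta> F. F > F0 \<and> F \<ge> 0 \<and> Sp \<subseteq> {..<Lb k} \<and> (\<forall>r<Lb k. \<theta> r \<le> Lb k) \<and>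
      (\<Sum>r<Lb k. \<bar>(\<lambda>r. if r \<in> Sp then 1 else 0) r + (\<Sum>r'<Lb k. GA k r r' * (\<lambda>r. if r \<in> Sp then 1 else 0) r')\<bar> powr p) > 0 \<and>
      (\<Sum>r<Lb k. \<bar>(if r < \<theta> r then (\<lambda>r. if r \<in> Sp then 1 else 0) r else 0)
          + (\<Sum>r'<Lb k. GA k r r' * (if r' < \<theta> r then (\<lambda>r. if r \<in> Sp then 1 else 0) r' else 0))\<bar> powr p)
        \<ge> F * (\<Sum>r<Lb k. \<bar>(\<lambda>r. if r \<in> Sp then 1 else 0) r + (\<Sum>r'<Lb k. GA k r r' * (\<lambda>r. if r \<in> Sp then 1 else 0) r')\<bar> powr p)"
proof -
  obtain k :: nat where k: "real k > 2 powr p * max F0 0" using reals_Archimedean2 by blast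
  define Sp where "Sp = {..<(2::nat) ^ k}"
  define \<theta> where "\<theta> = (\<lambda>r. if 2 ^ k \<le> r \<and> r < Lb k then dM k (r - 2 ^ k) else Lb k)"
  define F where "F = real k * (1/2) powr p"
  have p0: "p > 0" using p by simp
  note v = caseA_vals[OF p0, of k, folded Sp_def, folded \<theta>_def]
  show ?thesis
  proof (intro exI conjI)
    show "F > F0"
    proof -
      have h2: "(0::real) < 2 powr p" by simp
      have "max F0 0 < real k / 2 powr p" using k by (subst pos_less_divide_eq[OF h2]) (simp only: mult.commute)
      moreover have "F = real k / 2 powr p" by (simp add: F_def powr_divide)
      ultimately show ?thesis by linarith
    qed
    show "F \<ge> 0" by (simp add: F_def)
    show "Sp \<subseteq> {..<Lb k}" by (auto simp: Sp_def Lb_Ysz)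
    show "\<forall>r<Lb k. \<theta> r \<le> Lb k" using caseA_vals(3)[OF p0, of k] by (simp add: \<theta>_def)
    show "(\<Sum>r<Lb k. \<bar>(\<lambda>r. if r \<in> Sp then 1 else 0) r + (\<Sum>r'<Lb k. GA k r r' * (\<lambda>r. if r \<in> Sp then 1 else 0) r')\<bar> powr p) > 0"
      using v(1) by simp
    show "(\<Sum>r<Lb k. \<bar>(if r < \<theta> r then (\<lambda>r. if r \<in> Sp then 1 else 0) r else 0)
          + (\<Sum>r'<Lb k. GA k r r' * (if r' < \<theta> r then (\<lambda>r. if r \<in> Sp then 1 else 0) r' else 0))\<bar> powr p)
        \<ge> F * (\<Sum>r<Lb k. \<bar>(\<lambda>r. if r \<in> Sp then 1 else 0) r + (\<Sum>r'<Lb k. GA k r r' * (\<lambda>r. if r \<in> Sp then 1 else 0) r')\<bar> powr p)"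
      using v(1,2) by (simp add: F_def \<theta>_def)
  qed
qed

lemma caseB_F:
  fixes p :: real and k :: nat
  assumes p: "p > 1" and k: "k \<ge> 1"
  shows "(real k * 2 ^ k / 4) powr p / (2 ^ k) powr (p - 1) = real k powr (p - 1) / 4 powr p * (real k * 2 ^ k)"
proof -
  define N :: real where "N = 2 ^ k"
  have N0: "N > 0" by (simp add: N_def)
  have k0: "real k > 0" using k by simp
  have "(real k * N / 4) powr p = real k powr p * N powr p / 4 powr p"
    using N0 k0 by (simp add: powr_mult powr_divide)
  moreover have "N powr p = N powr (p - 1) * N" using N0 by (simp add: powr_diff)
  moreover have "real k powr p = real k powr (p - 1) * real k" using k0 by (simp add: powr_diff)
  ultimately have "(real k * N / 4) powr p / N powr (p - 1) = real k powr (p - 1) / 4 powr p * (real k * N)"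
    using N0 by (simp add: field_simps)
  then show ?thesis by (simp add: N_def)
qed

lemma caseB_H:
  fixes p :: real
  assumes p: "p > 1"
  shows "\<exists>k Sp \<theta> F. F > F0 \<and> F \<ge> 0 \<and> Sp \<subseteq> {..<Lb k} \<and> (\<forall>r<Lb k. \<theta> r \<le> Lb k) \<and>
      (\<Sum>r<Lb k. \<bar>(\<lambda>r. if r \<in> Sp then 1 else 0) r + (\<Sum>r'<Lb k. GB k r r' * (\<lambda>r. if r \<in> Sp then 1 else 0) r')\<bar> powr p) > 0 \<and>
      (\<Sum>r<Lb k. \<bar>(if r < \<theta> r then (\<lambda>r. if r \<in> Sp then 1 else 0) r else 0)
          + (\<Sum>r'<Lb k. GB k r r' * (if r' < \<theta> r then (\<lambda>r. if r \<in> Sp then 1 else 0) r' else 0))\<bar> powr p)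
        \<ge> F * (\<Sum>r<Lb k. \<bar>(\<lambda>r. if r \<in> Sp then 1 else 0) r + (\<Sum>r'<Lb k. GB k r r' * (\<lambda>r. if r \<in> Sp then 1 else 0) r')\<bar> powr p)"
proof -
  define c where "c = 4 powr p * max F0 0 + 1"
  have c1: "c \<ge> 1" by (simp add: c_def)
  obtain k0 :: nat where k0: "real k0 > c powr (1 / (p - 1))" using reals_Archimedean2 by blast
  define k where "k = Suc k0"
  have k1: "k \<ge> 1" by (simp add: k_def)
  have kc: "real k > c powr (1 / (p - 1))" using k0 by (simp add: k_def)
  define Sp where "Sp = {r. 2 ^ k \<le> r \<and> r < Lb k \<and> actrow k (r - 2 ^ k)}"
  define \<theta> where "\<theta> = (\<lambda>r. if r < 2 ^ k then 2 ^ k + Suc r * k * 2 ^ k else Lb k)"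
  define F where "F = real k powr (p - 1) / 4 powr p"
  have p0: "p > 0" using p by simp
  note v1 = caseB_vals1[OF p0, of k, folded Sp_def]
  note v2 = caseB_vals2[OF p, of k, folded Sp_def, folded \<theta>_def]
  show ?thesis
  proof (intro exI conjI)
    show "F > F0"
    proof -
      have "(c powr (1 / (p - 1))) powr (p - 1) < real k powr (p - 1)"
        using kc p c1 by (intro powr_less_mono2) auto
      then have "c < real k powr (p - 1)" using p c1 by (simp add: powr_powr)
      then have "c / 4 powr p < F" by (simp add: F_def divide_strict_right_mono)
      moreover have "c / 4 powr p = max F0 0 + 1 / 4 powr p" by (simp add: c_def add_divide_distrib)
      moreover have "1 / 4 powr p > 0" by simp
      ultimately show ?thesis by linarith
    qed
    show "F \<ge> 0" by (simp add: F_def)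
    show "Sp \<subseteq> {..<Lb k}" by (auto simp: Sp_def)
    show "\<forall>r<Lb k. \<theta> r \<le> Lb k" using caseB_vals2(1)[OF p, of k] by (simp add: \<theta>_def)
    show "(\<Sum>r<Lb k. \<bar>(\<lambda>r. if r \<in> Sp then 1 else 0) r + (\<Sum>r'<Lb k. GB k r r' * (\<lambda>r. if r \<in> Sp then 1 else 0) r')\<bar> powr p) > 0"
      using v1 k1 by simp
    show "(\<Sum>r<Lb k. \<bar>(if r < \<theta> r then (\<lambda>r. if r \<in> Sp then 1 else 0) r else 0)
          + (\<Sum>r'<Lb k. GB k r r' * (if r' < \<theta> r then (\<lambda>r. if r \<in> Sp then 1 else 0) r' else 0))\<bar> powr p)
        \<ge> F * (\<Sum>r<Lb k. \<bar>(\<lambda>r. if r \<in> Sp then 1 else 0) r + (\<Sum>r'<Lb k. GB k r r' * (\<lambda>r. if r \<in> Sp then 1 else 0) r')\<bar> powr p)"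
      using v1 v2(2) caseB_F[OF p k1] by (simp add: F_def \<theta>_def)
  qed
qed

theorem proposition4p2:
  fixes p :: real
  assumes "1 < p"
  shows "\<exists>u :: nat \<Rightarrow> nat \<Rightarrow> real.
           schauder_basis p u \<and> equivalent_seq p u canon_basis \<and>
           \<not> bibasic p u \<and> \<not> uniformly_quasi_greedy p u"
proof (cases "p \<ge> 2")
  case True
  interpret A: blocksys p GA
    by unfold_locales (use assms True GA_nil GA_con in auto)
  have H: "\<exists>k Sp \<theta> F. F > F0 \<and> F \<ge> 0 \<and> Sp \<subseteq> {..<Lb k} \<and> (\<forall>r<Lb k. \<theta> r \<le> Lb k) \<and>
      (\<Sum>r<Lb k. \<bar>A.Tl k (\<lambda>r. if r \<in> Sp then 1 else 0) r\<bar> powr p) > 0 \<and>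
      (\<Sum>r<Lb k. \<bar>A.Tl k (A.Pl (\<theta> r) (\<lambda>r. if r \<in> Sp then 1 else 0)) r\<bar> powr p)
        \<ge> F * (\<Sum>r<Lb k. \<bar>A.Tl k (\<lambda>r. if r \<in> Sp then 1 else 0) r\<bar> powr p)" for F0
    using caseA_H[OF True, of F0] unfolding A.Tl_def A.Pl_def by simp
  show ?thesis using A.schauder A.equiv A.fails[OF H] by blast
next
  case False
  interpret B: blocksys p GB
    by unfold_locales (use assms False GB_nil GB_con in auto)
  have H: "\<exists>k Sp \<theta> F. F > F0 \<and> F \<ge> 0 \<and> Sp \<subseteq> {..<Lb k} \<and> (\<forall>r<Lb k. \<theta> r \<le> Lb k) \<and>
      (\<Sum>r<Lb k. \<bar>B.Tl k (\<lambda>r. if r \<in> Sp then 1 else 0) r\<bar> powr p) > 0 \<and>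
      (\<Sum>r<Lb k. \<bar>B.Tl k (B.Pl (\<theta> r) (\<lambda>r. if r \<in> Sp then 1 else 0)) r\<bar> powr p)
        \<ge> F * (\<Sum>r<Lb k. \<bar>B.Tl k (\<lambda>r. if r \<in> Sp then 1 else 0) r\<bar> powr p)" for F0
    using caseB_H[OF assms, of F0] unfolding B.Tl_def B.Pl_def by simp
  show ?thesis using B.schauder B.equiv B.fails[OF H] by blast
qed


end
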